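(* Let $P$ be a convex euclidean $p$-gon, and let $r\le p-1$ be the rank of the abelian group generated by the translations in the sides of $P$. Then the complexity $f(n)$ of the outer billiard about $P$ satisfies $f(n)\prec n^{r+2}$.
   Context: The translations in the sides of $P$ are the compositions $T_aT_b$ of point reflections $T_a(x)=2a-x$, $T_b(x)=2b-x$ in the endpoints $a,b$ of a side (translations by $2(a-b)$). Outer billiard: $X=\mathbb R^2\setminus P$ is partitioned by the rays extending the sides of $P$ (ray extending side $ab$ beyond $a$, vertices counterclockwise) into regions $X_a$ indexed by vertices ($X_a$ = points $x$ such that the line through $x$ and $a$ supports $P$ with $P$ on a fixed side); the map is $T=T_a$ on $X_a$. A point is regular if no iterate lies on the rays; its length-$n$ code is the word $a_1\cdots a_n$ with $T^{i-1}x\in X_{a_i}$; $f(n)$ is the number of distinct codes of length $n$. $g\prec h$ means $g(n)\le Ch(n)$ for some $C$ and all large $n$. *)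

theory Defs
  imports "HOL-Analysis.Analysis"
begin

text \<open>The euclidean plane is modelled by the complex numbers.
  cross a b is the signed area (2D cross product) of a and b.\<close>

definition cross :: "complex \<Rightarrow> complex \<Rightarrow> real" where
  "cross a b = Im (cnj a * b)"

text \<open>A convex euclidean p-gon with vertices v 0, ..., v (p-1), listed counterclockwise
  (indices mod p): every vertex other than the endpoints of a side lies strictly to the
  left of that directed side.\<close>

definition convex_polygon :: "nat \<Rightarrow> (nat \<Rightarrow> complex) \<Rightarrow> bool" where
  "convex_polygon p v \<longleftrightarrow> p \<ge> 3 \<and>
     (\<forall>i<p. \<forall>j<p. j \<noteq> i \<and> j \<noteq> Suc i mod p \<longrightarrow>
        cross (v (Suc i mod p) - v i) (v j - v i) > 0)"

definition polygon :: "nat \<Rightarrow> (nat \<Rightarrow> complex) \<Rightarrow> complex set" where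
  "polygon p v = convex hull (v ` {..<p})"

text \<open>Open region X_a for the vertex a = v i (a point not on the rays extending the sides):
  x lies outside P and the line through x and v i supports P, with all other vertices
  strictly on the left of the directed line from x to v i.\<close>

definition in_region :: "nat \<Rightarrow> (nat \<Rightarrow> complex) \<Rightarrow> complex \<Rightarrow> nat \<Rightarrow> bool" where
  "in_region p v x i \<longleftrightarrow> i < p \<and> x \<notin> polygon p v \<and>
     (\<forall>j<p. j \<noteq> i \<longrightarrow> cross (v i - x) (v j - v i) > 0)"

fun orbit :: "(nat \<Rightarrow> complex) \<Rightarrow> (nat \<Rightarrow> nat) \<Rightarrow> complex \<Rightarrow> nat \<Rightarrow> complex" where
  "orbit v c x 0 = x"
| "orbit v c x (Suc k) = 2 * v (c k) - orbit v c x k"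

text \<open>x is regular with (infinite) code c: the k-th iterate T^k x lies in the open region
  X_(v (c k)), and T^(k+1) x = T_(v (c k)) (T^k x).\<close>

definition regular_code :: "nat \<Rightarrow> (nat \<Rightarrow> complex) \<Rightarrow> complex \<Rightarrow> (nat \<Rightarrow> nat) \<Rightarrow> bool" where
  "regular_code p v x c \<longleftrightarrow> (\<forall>k. in_region p v (orbit v c x k) (c k))"

definition regular :: "nat \<Rightarrow> (nat \<Rightarrow> complex) \<Rightarrow> complex \<Rightarrow> bool" where
  "regular p v x \<longleftrightarrow> (\<exists>c. regular_code p v x c)"

definition complexity :: "nat \<Rightarrow> (nat \<Rightarrow> complex) \<Rightarrow> nat \<Rightarrow> nat" where
  "complexity p v n = card {map c [0..<n] | x c. regular_code p v x c}"

text \<open>The abelian group (subgroup of (C,+)) generated by the translations T_a T_b, i.e.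
  translations by 2(a - b), for the sides ab of P.\<close>

definition side_translation_group :: "nat \<Rightarrow> (nat \<Rightarrow> complex) \<Rightarrow> complex set" where
  "side_translation_group p v =
     {\<Sum>i<p. of_int (k i) * (2 * (v i - v (Suc i mod p))) | k. True}"

definition int_independent :: "complex set \<Rightarrow> bool" where
  "int_independent S \<longleftrightarrow> (\<forall>k :: complex \<Rightarrow> int.
      (\<Sum>s\<in>S. of_int (k s) * s) = 0 \<longrightarrow> (\<forall>s\<in>S. k s = 0))"

definition group_rank :: "complex set \<Rightarrow> nat" where
  "group_rank G = Max {card S | S. S \<subseteq> G \<and> finite S \<and> int_independent S}"

end

theory Submission
  imports Defs
begin

lemma cross_eq: "cross a b = Re a * Im b - Im a * Re b"
  by (simp add: cross_def)

lemma cross_add_left: "cross (a + b) c = cross a c + cross b c"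
  by (simp add: cross_eq algebra_simps)
lemma cross_add_right: "cross a (b + c) = cross a b + cross a c"
  by (simp add: cross_eq algebra_simps)
lemma cross_diff_left: "cross (a - b) c = cross a c - cross b c"
  by (simp add: cross_eq algebra_simps)
lemma cross_diff_right: "cross a (b - c) = cross a b - cross a c"
  by (simp add: cross_eq algebra_simps)
lemma cross_minus_left: "cross (- a) c = - cross a c"
  by (simp add: cross_eq algebra_simps)
lemma cross_minus_right: "cross a (- c) = - cross a c"
  by (simp add: cross_eq algebra_simps)
lemma cross_scale_left: "cross (of_real s * a) c = s * cross a c"
  by (simp add: cross_eq algebra_simps)
lemma cross_scale_right: "cross a (of_real s * c) = s * cross a c"
  by (simp add: cross_eq algebra_simps)
lemma cross_self: "cross a a = 0"
  by (simp add: cross_eq algebra_simps)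
lemma cross_anti: "cross a b = - cross b a"
  by (simp add: cross_eq algebra_simps)
lemma cross_zero_left[simp]: "cross 0 b = 0" by (simp add: cross_eq)
lemma cross_zero_right[simp]: "cross a 0 = 0" by (simp add: cross_eq)

lemma cross_ident:
  "cross a b * cross d u = cross u b * cross d a + cross a u * cross d b"
  by (simp add: cross_eq algebra_simps)

lemma cross_line:
  assumes "cross e y = 0" "e \<noteq> 0"
  shows "\<exists>\<mu>::real. y = of_real \<mu> * e"
proof -
  have h: "Re e * Im y = Im e * Re y" using assms(1) by (simp add: cross_eq)
  have n: "(Re e)^2 + (Im e)^2 \<noteq> 0" using assms(2)
    by (metis complex_eq_iff sum_power2_eq_zero_iff zero_complex.simps)
  define \<mu> where "\<mu> = (Re e * Re y + Im e * Im y) / ((Re e)^2 + (Im e)^2)"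
  have "y = of_real \<mu> * e"
  proof (rule complex_eqI)
    show "Re y = Re (complex_of_real \<mu> * e)"
      using n h by (simp add: \<mu>_def field_simps power2_eq_square)
    show "Im y = Im (complex_of_real \<mu> * e)"
      using n h by (simp add: \<mu>_def field_simps power2_eq_square)
  qed
  then show ?thesis by blast
qed


locale poly =
  fixes p :: nat and v :: "nat \<Rightarrow> complex"
  assumes cp: "convex_polygon p v"
begin

definition nx :: "nat \<Rightarrow> nat" where "nx c = Suc c mod p"
definition pv :: "nat \<Rightarrow> nat" where "pv c = (c + p - 1) mod p"
definition e :: "nat \<Rightarrow> complex" where "e c = v (nx c) - v c"
definition L :: "nat \<Rightarrow> complex \<Rightarrow> real" where "L c q = cross (e c) (q - v c)"
definition Xc :: "complex \<Rightarrow> nat \<Rightarrow> bool" where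
  "Xc q a \<longleftrightarrow> (\<forall>j<p. j \<noteq> a \<longrightarrow> 0 < cross (v a - q) (v j - v a))"
definition Yc :: "complex \<Rightarrow> nat \<Rightarrow> bool" where
  "Yc z a \<longleftrightarrow> (\<forall>j<p. j \<noteq> a \<longrightarrow> 0 < cross (z - v a) (v j - v a))"
definition ray :: "nat \<Rightarrow> complex set" where
  "ray c = {v c - of_real s * e c | s. 0 < s}"

lemma p3: "p \<ge> 3" using cp by (simp add: convex_polygon_def)

lemma conv: "i < p \<Longrightarrow> j < p \<Longrightarrow> j \<noteq> i \<Longrightarrow> j \<noteq> nx i \<Longrightarrow> 0 < L i (v j)"
  using cp by (simp add: convex_polygon_def L_def e_def nx_def)

lemma nx_lt: "nx c < p" using p3 by (simp add: nx_def)
lemma pv_lt: "pv c < p" using p3 by (simp add: pv_def)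
lemma nx_pv: "c < p \<Longrightarrow> nx (pv c) = c"
proof -
  assume c: "c < p"
  have "nx (pv c) = Suc (c + p - 1) mod p" by (simp add: nx_def pv_def mod_Suc_eq)
  also have "Suc (c + p - 1) = c + p" using p3 by simp
  finally show ?thesis using c by simp
qed
lemma pv_nx: "c < p \<Longrightarrow> pv (nx c) = c"
proof -
  assume c: "c < p"
  show ?thesis
  proof (cases "Suc c < p")
    case True
    then have "nx c = Suc c" by (simp add: nx_def)
    then show ?thesis using p3 by (simp add: pv_def) (metis add.commute c mod_add_self2 mod_less)
  next
    case False
    then have "Suc c = p" using c by simp
    then have "nx c = 0" by (simp add: nx_def)
    then show ?thesis using p3 \<open>Suc c = p\<close> by (simp add: pv_def)
  qed
qed
lemma nx_neq: "c < p \<Longrightarrow> nx c \<noteq> c"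
proof (cases "Suc c < p")
  case True then show ?thesis by (simp add: nx_def)
next
  case False
  assume "c < p"
  then have "Suc c = p" using False by simp
  then show ?thesis using p3 by (simp add: nx_def)
qed
lemma pv_neq: "c < p \<Longrightarrow> pv c \<noteq> c"
  using nx_pv nx_neq pv_lt by metis
lemma nx_neq_pv: "c < p \<Longrightarrow> nx c \<noteq> pv c"
proof
  assume c: "c < p" and h: "nx c = pv c"
  have "nx (nx c) = c" using h nx_pv c by simp
  show False
  proof (cases "Suc c < p")
    case True
    then have a: "nx c = Suc c" by (simp add: nx_def)
    show False
    proof (cases "Suc (Suc c) < p")
      case True then show False using a \<open>nx (nx c) = c\<close> by (simp add: nx_def)
    next
      case False
      then have "Suc (Suc c) = p" using \<open>Suc c < p\<close> by simp
      then show False using a \<open>nx (nx c) = c\<close> p3 by (simp add: nx_def)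
    qed
  next
    case False
    then have "Suc c = p" using c by simp
    then have "nx c = 0" by (simp add: nx_def)
    then show False using \<open>nx (nx c) = c\<close> p3 \<open>Suc c = p\<close> by (simp add: nx_def)
  qed
qed

lemma L_self: "L c (v c) = 0" by (simp add: L_def)
lemma L_nx: "L c (v (nx c)) = 0" by (simp add: L_def e_def cross_self)

lemma e_nz: "c < p \<Longrightarrow> e c \<noteq> 0"
proof
  assume c: "c < p" and "e c = 0"
  have "pv c \<noteq> nx c" using nx_neq_pv c by metis
  then have "0 < L c (v (pv c))" using conv[of c "pv c"] c pv_lt pv_neq by auto
  then show False using \<open>e c = 0\<close> by (simp add: L_def)
qed

lemma K_pos: "c < p \<Longrightarrow> 0 < cross (e (pv c)) (e c)"
proof -
  assume c: "c < p"
  have "0 < L (pv c) (v (nx c))"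
    using conv[of "pv c" "nx c"] c pv_lt nx_lt nx_neq_pv nx_pv nx_neq
    by (metis pv_nx)
  moreover have "L (pv c) (v (nx c)) = cross (e (pv c)) (e c)"
  proof -
    have "v (nx c) - v (pv c) = e c + e (pv c)" using nx_pv[OF c] by (simp add: e_def)
    then show ?thesis by (simp add: L_def cross_add_right cross_self)
  qed
  ultimately show ?thesis by simp
qed

lemma L_shift: "L c q = cross (e c) (q - v (nx c))"
proof -
  have "cross (e c) (e c) = 0" by (rule cross_self)
  then show ?thesis unfolding L_def e_def cross_diff_right by simp
qed

end

context poly begin

lemma hull_side:
  assumes a: "a < p" and d: "\<forall>j<p. j \<noteq> a \<longrightarrow> 0 < cross d (v j - v a)"
    and q: "q \<in> polygon p v"
  shows "0 < cross d (q - v a) \<or> q = v a"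
proof -
  define H where "H = {y. 0 < cross d (y - v a) \<or> y = v a}"
  have cH: "convex H"
    unfolding convex_def
  proof (intro ballI allI impI)
    fix x y :: complex and u w :: real
    assume x: "x \<in> H" and y: "y \<in> H" and u: "0 \<le> u" and w: "0 \<le> w" and uw: "u + w = 1"
    have va: "v a = of_real u * v a + of_real w * v a"
    proof -
      have "of_real u * v a + of_real w * v a = of_real (u + w) * v a" by (simp add: distrib_right)
      then show ?thesis using uw by simp
    qed
    have eq: "u *\<^sub>R x + w *\<^sub>R y - v a = of_real u * (x - v a) + of_real w * (y - v a)"
      by (subst va) (simp add: scaleR_conv_of_real algebra_simps)
    have F: "cross d (u *\<^sub>R x + w *\<^sub>R y - v a) = u * cross d (x - v a) + w * cross d (y - v a)"
      unfolding eq cross_add_right cross_scale_right by (rule refl)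
    have fx: "0 \<le> cross d (x - v a)" using x by (auto simp: H_def)
    have fy: "0 \<le> cross d (y - v a)" using y by (auto simp: H_def)
    show "u *\<^sub>R x + w *\<^sub>R y \<in> H"
    proof (cases "0 < u * cross d (x - v a) + w * cross d (y - v a)")
      case True then show ?thesis using F by (simp add: H_def)
    next
      case False
      have g1: "0 \<le> u * cross d (x - v a)" using u fx by simp
      have g2: "0 \<le> w * cross d (y - v a)" using w fy by simp
      have "u * cross d (x - v a) = 0" "w * cross d (y - v a) = 0"
        using False g1 g2 by linarith+
      then have hx: "u = 0 \<or> x = v a" and hy: "w = 0 \<or> y = v a"
        using x y by (auto simp: H_def)
      have "u *\<^sub>R x + w *\<^sub>R y = v a"
      proof (cases "u = 0")
        case True
        then have "w = 1" using uw by simp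
        then show ?thesis using True hy by simp
      next
        case False
        then have xa: "x = v a" using hx by simp
        show ?thesis
        proof (cases "w = 0")
          case True
          then have "u = 1" using uw by simp
          then show ?thesis using True xa by simp
        next
          case False
          then have "y = v a" using hy by simp
          then have "u *\<^sub>R x + w *\<^sub>R y = (u + w) *\<^sub>R v a" using xa by (simp add: scaleR_add_left)
          then show ?thesis using uw by simp
        qed
      qed
      then show ?thesis by (simp add: H_def)
    qed
  qed
  have sub: "v ` {..<p} \<subseteq> H"
  proof
    fix y assume "y \<in> v ` {..<p}"
    then obtain j where j: "j < p" "y = v j" by auto
    show "y \<in> H" using d j by (cases "j = a") (auto simp: H_def)
  qed
  have "polygon p v \<subseteq> H" unfolding polygon_def using hull_minimal[where S=convex, OF sub cH] .
  then show ?thesis using q by (auto simp: H_def)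
qed

lemma Xc_notin: assumes "a < p" "Xc q a" shows "q \<notin> polygon p v"
proof
  assume q: "q \<in> polygon p v"
  have d: "\<forall>j<p. j \<noteq> a \<longrightarrow> 0 < cross (v a - q) (v j - v a)" using assms(2) by (simp add: Xc_def)
  have "cross (v a - q) (q - v a) = 0" by (simp add: cross_eq algebra_simps)
  then have qa: "q = v a" using hull_side[OF assms(1) d q] by simp
  have "0 < cross (v a - q) (v (nx a) - v a)" using d nx_lt nx_neq assms(1) by blast
  then show False using qa by simp
qed

lemma Yc_notin: assumes "a < p" "Yc q a" shows "q \<notin> polygon p v"
proof
  assume q: "q \<in> polygon p v"
  have d: "\<forall>j<p. j \<noteq> a \<longrightarrow> 0 < cross (q - v a) (v j - v a)" using assms(2) by (simp add: Yc_def)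
  have "cross (q - v a) (q - v a) = 0" by (simp add: cross_self)
  then have qa: "q = v a" using hull_side[OF assms(1) d q] by simp
  have "0 < cross (q - v a) (v (nx a) - v a)" using d nx_lt nx_neq assms(1) by blast
  then show False using qa by simp
qed

lemma in_region_iff: "in_region p v q a \<longleftrightarrow> a < p \<and> Xc q a"
proof
  assume "in_region p v q a"
  then show "a < p \<and> Xc q a" unfolding in_region_def Xc_def by blast
next
  assume h: "a < p \<and> Xc q a"
  then have "q \<notin> polygon p v" using Xc_notin by blast
  then show "in_region p v q a" using h unfolding in_region_def Xc_def by blast
qed

lemma Xc_Yc: "Xc q a \<longleftrightarrow> Yc (2 * v a - q) a"
proof -
  have "2 * v a - q - v a = v a - q" by simp
  then show ?thesis by (simp add: Xc_def Yc_def)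
qed

lemma Xc_disj: assumes "a < p" "b < p" "Xc q a" "Xc q b" shows "a = b"
proof (rule ccontr)
  assume ab: "a \<noteq> b"
  have 1: "0 < cross (v a - q) (v b - v a)" using assms ab by (simp add: Xc_def)
  have 2: "0 < cross (v b - q) (v a - v b)" using assms ab by (simp add: Xc_def)
  have "cross (v a - q) (v b - v a) + cross (v b - q) (v a - v b) = 0"
    by (simp add: cross_eq algebra_simps)
  then show False using 1 2 by simp
qed

lemma Yc_disj: assumes "a < p" "b < p" "Yc q a" "Yc q b" shows "a = b"
proof (rule ccontr)
  assume ab: "a \<noteq> b"
  have 1: "0 < cross (q - v a) (v b - v a)" using assms ab by (simp add: Yc_def)
  have 2: "0 < cross (q - v b) (v a - v b)" using assms ab by (simp add: Yc_def)
  have "cross (q - v a) (v b - v a) + cross (q - v b) (v a - v b) = 0"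
    by (simp add: cross_eq algebra_simps)
  then show False using 1 2 by simp
qed

lemma L_pv: "c < p \<Longrightarrow> L (pv c) q = cross (e (pv c)) (q - v c)"
  using L_shift nx_pv by simp

lemma Xc_L: assumes "d < p" "Xc q d" shows "0 < L d q \<and> L (pv d) q < 0"
proof -
  have "0 < cross (v d - q) (v (nx d) - v d)" using assms nx_lt nx_neq by (simp add: Xc_def)
  moreover have "cross (v d - q) (v (nx d) - v d) = L d q"
    by (simp add: L_def e_def cross_eq algebra_simps)
  moreover have "0 < cross (v d - q) (v (pv d) - v d)" using assms pv_lt pv_neq by (simp add: Xc_def)
  moreover have "cross (v d - q) (v (pv d) - v d) = - L (pv d) q"
    using L_pv[OF assms(1)] nx_pv[OF assms(1)] by (simp add: e_def cross_eq algebra_simps)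
  ultimately show ?thesis by simp
qed

lemma sign_X: assumes c: "c < p" and l1: "0 < L c q" and l0: "L (pv c) q < 0"
  shows "Xc q c"
  unfolding Xc_def
proof (intro allI impI)
  fix j assume j1: "j < p" and j2: "j \<noteq> c"
  have j: "j < p \<and> j \<noteq> c" using j1 j2 by simp
  define d where "d = v c - q"
  define u where "u = v j - v c"
  have id: "cross (e (pv c)) (e c) * cross d u =
      cross u (e c) * cross d (e (pv c)) + cross (e (pv c)) u * cross d (e c)"
    by (rule cross_ident)
  have h1: "cross d (e c) = L c q" by (simp add: d_def L_def cross_eq algebra_simps)
  have h2: "cross d (e (pv c)) = L (pv c) q" using L_pv[OF c] by (simp add: d_def cross_eq algebra_simps)
  have h3: "cross u (e c) = - L c (v j)" by (simp add: u_def L_def cross_eq algebra_simps)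
  have h4: "cross (e (pv c)) u = L (pv c) (v j)" using L_pv[OF c] by (simp add: u_def)
  have A: "0 \<le> L c (v j)" using conv[of c j] j c L_nx by (cases "j = nx c") auto
  have B: "0 \<le> L (pv c) (v j)" using conv[of "pv c" j] j c L_self pv_lt nx_pv by (cases "j = pv c") auto
  have AB: "0 < L c (v j) \<or> 0 < L (pv c) (v j)"
  proof (cases "j = nx c")
    case False then show ?thesis using conv[of c j] j c by auto
  next
    case True
    then have "j \<noteq> pv c" using nx_neq_pv c by auto
    then show ?thesis using conv[of "pv c" j] j c pv_lt nx_pv by auto
  qed
  have pos: "0 < (- L c (v j)) * L (pv c) q + L (pv c) (v j) * L c q"
  proof -
    have "L c (v j) * L (pv c) q \<le> 0" using A l0 by (simp add: mult_nonneg_nonpos)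
    then have t1: "0 \<le> (- L c (v j)) * L (pv c) q" by simp
    have t2: "0 \<le> L (pv c) (v j) * L c q" using B l1 by simp
    have "0 < (- L c (v j)) * L (pv c) q \<or> 0 < L (pv c) (v j) * L c q"
    proof (cases "0 < L c (v j)")
      case True
      have "L c (v j) * L (pv c) q < 0" using True l0 by (rule mult_pos_neg)
      then show ?thesis by simp
    next
      case False
      then have "0 < L (pv c) (v j)" using AB by simp
      then show ?thesis using l1 by (simp add: mult_pos_pos)
    qed
    then show ?thesis using t1 t2 by linarith
  qed
  have "0 < cross (e (pv c)) (e c) * cross d u" using id h1 h2 h3 h4 pos by simp
  then have "0 < cross d u" using K_pos[OF c] by (simp add: zero_less_mult_iff)
  then show "0 < cross (v c - q) (v j - v c)" by (simp add: d_def u_def)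
qed

lemma ray_L: assumes c: "c < p" and q: "q \<in> ray c"
  shows "L c q = 0 \<and> L (pv c) q < 0 \<and> 0 < L (nx c) q"
proof -
  obtain s where s: "0 < s" "q = v c - of_real s * e c" using q by (auto simp: ray_def)
  have "L c q = 0" using s by (simp add: L_def cross_minus_right cross_scale_right cross_self)
  moreover have "L (pv c) q = - s * cross (e (pv c)) (e c)"
    using s L_pv[OF c] by (simp add: cross_minus_right cross_scale_right)
  moreover have "L (nx c) q = (1 + s) * cross (e c) (e (nx c))"
  proof -
    have eq: "q - v (nx c) = - (of_real (1 + s) * e c)" using s by (simp add: e_def algebra_simps)
    have "L (nx c) q = cross (e (nx c)) (- (of_real (1 + s) * e c))" unfolding L_def eq by (rule refl)
    also have "\<dots> = - ((1 + s) * cross (e (nx c)) (e c))" by (simp only: cross_minus_right cross_scale_right)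
    also have "\<dots> = (1 + s) * cross (e c) (e (nx c))" using cross_anti[of "e (nx c)" "e c"] by simp
    finally show ?thesis .
  qed
  moreover have "0 < cross (e c) (e (nx c))" using K_pos[OF nx_lt[of c]] pv_nx[OF c] by simp
  ultimately show ?thesis using K_pos[OF c] s(1) by (simp add: mult_pos_pos)
qed

lemma sign_X_or_ray: assumes c: "c < p" and l0: "L (pv c) q < 0" and l1: "0 \<le> L c q"
  shows "Xc q c \<or> q \<in> ray c"
proof (cases "0 < L c q")
  case True then show ?thesis using sign_X c l0 by blast
next
  case False
  then have "cross (e c) (q - v c) = 0" using l1 by (simp add: L_def)
  then obtain \<mu> where mu: "q - v c = of_real \<mu> * e c" using cross_line e_nz[OF c] by blast
  have "L (pv c) q = \<mu> * cross (e (pv c)) (e c)"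
    using L_pv[OF c] mu by (simp add: cross_scale_right)
  then have "\<mu> < 0" using l0 K_pos[OF c] by (simp add: mult_less_0_iff)
  then have "q \<in> ray c" using mu unfolding ray_def
    by (intro CollectI exI[of _ "- \<mu>"]) (auto simp: algebra_simps)
  then show ?thesis by blast
qed

definition Wn :: "nat \<Rightarrow> complex set" where
  "Wn c = {q. L (pv c) q < 0 \<and> 0 < L (nx c) q}"

lemma ray_Wn: "c < p \<Longrightarrow> ray c \<subseteq> Wn c"
  using ray_L by (auto simp: Wn_def)

lemma Wn_split: assumes c: "c < p" and q: "q \<in> Wn c"
  shows "Xc q c \<or> q \<in> ray c \<or> Xc q (nx c)"
proof (cases "0 \<le> L c q")
  case True then show ?thesis using sign_X_or_ray c q by (auto simp: Wn_def)
next
  case False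
  have "Xc q (nx c)" using sign_X[OF nx_lt[of c]] q False pv_nx[OF c] by (auto simp: Wn_def)
  then show ?thesis by blast
qed

lemma ray_X_disj: assumes c: "c < p" and d: "d < p" and q: "q \<in> ray c" shows "\<not> Xc q d"
proof
  assume X: "Xc q d"
  have r: "L c q = 0 \<and> L (pv c) q < 0 \<and> 0 < L (nx c) q" using ray_L c q by blast
  have x: "0 < L d q \<and> L (pv d) q < 0" using Xc_L d X by blast
  show False
  proof (cases "d = c \<or> d = nx c")
    case True then show False using r x pv_nx[OF c] by auto
  next
    case False
    obtain s where s: "0 < s" "q = v c - of_real s * e c" using q by (auto simp: ray_def)
    have "0 < cross (v d - q) (v c - v d)" using X False c by (auto simp: Xc_def)
    moreover have "cross (v d - q) (v c - v d) = s * cross (v d - q) (e c)"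
    proof -
      have eq: "v c - v d = of_real s * e c - (v d - q)" using s by simp
      show ?thesis unfolding eq by (simp add: cross_diff_right cross_scale_right cross_self)
    qed
    ultimately have "0 < cross (v d - q) (e c)" using s by (simp add: zero_less_mult_iff)
    moreover have "L c (v d) = - cross (v d - q) (e c)"
    proof -
      have eq: "v d - v c = (v d - q) - of_real s * e c" using s by simp
      show ?thesis unfolding L_def eq
        by (simp add: cross_diff_right cross_diff_left cross_scale_right cross_self cross_anti[of "e c"])
    qed
    moreover have "0 < L c (v d)" using conv[of c d] c d False by auto
    ultimately show False by simp
  qed
qed

lemma ray_ray_disj: assumes c: "c < p" and d: "d < p" and cd: "c \<noteq> d"
  and q1: "q \<in> ray c" and q2: "q \<in> ray d" shows False
proof -
  have r: "L c q = 0 \<and> L (pv c) q < 0 \<and> 0 < L (nx c) q" using ray_L c q1 by blast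
  have r2: "L d q = 0 \<and> L (pv d) q < 0 \<and> 0 < L (nx d) q" using ray_L d q2 by blast
  show False
  proof (cases "d = nx c \<or> d = pv c")
    case True then show False using r r2 by auto
  next
    case False
    obtain s where s: "0 < s" "q = v c - of_real s * e c" using q1 by (auto simp: ray_def)
    obtain t where t: "0 < t" "q = v d - of_real t * e d" using q2 by (auto simp: ray_def)
    have Lcd: "0 < L c (v d)" using conv[of c d] c d False cd by auto
    have "c \<noteq> nx d" using False pv_nx[OF d] by auto
    then have Ldc: "0 < L d (v c)" using conv[of d c] c d cd by auto
    have eq1: "q - v c = (v d - v c) - of_real t * e d" using t by simp
    have e1: "L c q = L c (v d) - t * cross (e c) (e d)"
      unfolding L_def eq1 by (simp add: cross_diff_right cross_scale_right)
    have eq2: "q - v d = (v c - v d) - of_real s * e c" using s by simp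
    have e2: "L d q = L d (v c) - s * cross (e d) (e c)"
      unfolding L_def eq2 by (simp add: cross_diff_right cross_scale_right)
    have "0 < t * cross (e c) (e d)" using e1 r Lcd by simp
    then have "0 < cross (e c) (e d)" using t by (simp add: zero_less_mult_iff)
    moreover have "0 < s * cross (e d) (e c)" using e2 r2 Ldc by simp
    then have "0 < cross (e d) (e c)" using s by (simp add: zero_less_mult_iff)
    ultimately show False using cross_anti[of "e c" "e d"] by simp
  qed
qed

lemma Yc_cover: assumes b: "b < p" and Y: "Yc z b" shows "\<exists>c<p. Xc z c \<or> z \<in> ray c"
proof -
  have "0 < cross (z - v b) (v (nx b) - v b)" using Y b nx_lt nx_neq by (simp add: Yc_def)
  then have f0: "L b z < 0" by (simp add: L_def e_def cross_eq algebra_simps)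
  have "0 < cross (z - v b) (v (pv b) - v b)" using Y b pv_lt pv_neq by (simp add: Yc_def)
  moreover have "v (pv b) - v b = - e (pv b)" using nx_pv[OF b] by (simp add: e_def)
  ultimately have "0 < - cross (z - v b) (e (pv b))" by (simp add: cross_minus_right)
  then have fl: "0 < L (pv b) z" using L_pv[OF b] cross_anti[of "z - v b" "e (pv b)"] by simp
  define f where "f k = L ((b + k) mod p) z" for k
  have "pv b = (b + (p - 1)) mod p" using p3 by (simp add: pv_def)
  then have "0 \<le> f (p - 1)" using fl by (simp add: f_def)
  then obtain k where k: "k \<le> p - 1" "\<forall>i<k. \<not> 0 \<le> f i" "0 \<le> f k"
    using ex_least_nat_le[of "\<lambda>k. 0 \<le> f k"] by blast
  have k1: "k \<noteq> 0"
  proof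
    assume "k = 0"
    then show False using k(3) f0 b by (simp add: f_def)
  qed
  define c where "c = (b + k) mod p"
  have cp: "c < p" using p3 by (simp add: c_def)
  have "pv c = ((b + k) mod p + (p - 1)) mod p" using p3 by (simp add: pv_def c_def)
  also have "\<dots> = (b + k + (p - 1)) mod p" by (simp add: mod_add_left_eq)
  also have "b + k + (p - 1) = b + k + p - 1" using p3 by simp
  finally have "pv c = (b + k + p - 1) mod p" .
  also have "b + k + p - 1 = (b + (k - 1)) + p" using k1 by simp
  finally have "pv c = (b + (k - 1)) mod p" by simp
  moreover have "\<not> 0 \<le> f (k - 1)" using k(2) k1 by simp
  ultimately have "L (pv c) z < 0" by (simp add: f_def)
  moreover have "0 \<le> L c z" using k(3) by (simp add: f_def c_def)
  ultimately show ?thesis using sign_X_or_ray cp by blast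
qed

end

lemma orbit_formula: "orbit v c x k = (-1)^k * x + orbit v c 0 k"
  by (induction k) (auto simp: algebra_simps)

lemma orbit_cong: "(\<And>i. i < k \<Longrightarrow> c i = c' i) \<Longrightarrow> orbit v c x k = orbit v c' x k"
  by (induction k) auto

lemma orbit_affine:
  "orbit v c (x0 + of_real t * (x1 - x0)) k = orbit v c x0 k + of_real t * (orbit v c x1 k - orbit v c x0 k)"
proof -
  have a: "orbit v c (x0 + of_real t * (x1 - x0)) k = (-1)^k * (x0 + of_real t * (x1 - x0)) + orbit v c 0 k"
    by (rule orbit_formula)
  have b: "orbit v c x0 k = (-1)^k * x0 + orbit v c 0 k" by (rule orbit_formula)
  have c: "orbit v c x1 k = (-1)^k * x1 + orbit v c 0 k" by (rule orbit_formula)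
  show ?thesis unfolding a b c by (simp add: algebra_simps)
qed

context poly begin

definition D :: "nat list \<Rightarrow> complex set" where
  "D w = {x. \<forall>k<length w. in_region p v (orbit v (nth w) x k) (w ! k)}"

definition Cset :: "nat \<Rightarrow> nat list set" where
  "Cset n = {w. length w = n \<and> D w \<noteq> {}}"

lemma D_letters: "x \<in> D w \<Longrightarrow> set w \<subseteq> {..<p}"
  by (auto simp: D_def in_region_def in_set_conv_nth)

lemma finite_Cset: "finite (Cset n)"
proof -
  have "Cset n \<subseteq> {w. set w \<subseteq> {..<p} \<and> length w = n}"
    using D_letters by (auto simp: Cset_def)
  then show ?thesis using finite_lists_length_eq[of "{..<p}" n] finite_subset by blast
qed

lemma complexity_le: "complexity p v n \<le> card (Cset n)"
proof -
  have "{map c [0..<n] | x c. regular_code p v x c} \<subseteq> Cset n"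
  proof
    fix w assume "w \<in> {map c [0..<n] | x c. regular_code p v x c}"
    then obtain x c where w: "w = map c [0..<n]" and r: "regular_code p v x c" by blast
    have "x \<in> D w"
      unfolding D_def
    proof (intro CollectI allI impI)
      fix k assume k: "k < length w"
      have "orbit v (nth w) x k = orbit v c x k" by (rule orbit_cong) (use k w in auto)
      moreover have "w ! k = c k" using k w by simp
      ultimately show "in_region p v (orbit v (nth w) x k) (w ! k)"
        using r by (simp add: regular_code_def)
    qed
    moreover have "length w = n" using w by simp
    ultimately show "w \<in> Cset n" unfolding Cset_def by blast
  qed
  from card_mono[OF finite_Cset this] show ?thesis unfolding complexity_def .
qed

definition A :: "nat list \<Rightarrow> nat set" where
  "A w = {a. a < p \<and> (\<exists>x\<in>D w. in_region p v (orbit v (nth w) x (length w)) a)}"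

lemma D_snoc: "x \<in> D (w @ [a]) \<longleftrightarrow> x \<in> D w \<and> in_region p v (orbit v (nth w) x (length w)) a"
proof -
  have o: "orbit v (nth (w @ [a])) x k = orbit v (nth w) x k" if "k \<le> length w" for k
    by (rule orbit_cong) (use that in \<open>auto simp: nth_append\<close>)
  have "x \<in> D (w @ [a]) \<longleftrightarrow> (\<forall>k<Suc (length w). in_region p v (orbit v (nth (w @ [a])) x k) ((w @ [a]) ! k))"
    by (simp add: D_def)
  also have "\<dots> \<longleftrightarrow> in_region p v (orbit v (nth (w @ [a])) x (length w)) ((w @ [a]) ! length w) \<and>
      (\<forall>k<length w. in_region p v (orbit v (nth (w @ [a])) x k) ((w @ [a]) ! k))"
    by (rule All_less_Suc)
  also have "\<dots> \<longleftrightarrow> in_region p v (orbit v (nth w) x (length w)) a \<and>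
      (\<forall>k<length w. in_region p v (orbit v (nth w) x k) (w ! k))"
    using o by (simp add: nth_append)
  finally show ?thesis by (auto simp: D_def)
qed

lemma Cset_Suc: "card (Cset (Suc n)) \<le> (\<Sum>w\<in>Cset n. card (A w))"
proof -
  have sub: "Cset (Suc n) \<subseteq> (\<lambda>(w, a). w @ [a]) ` (SIGMA w:Cset n. A w)"
  proof
    fix w' assume w': "w' \<in> Cset (Suc n)"
    then have len: "length w' = Suc n" by (simp add: Cset_def)
    then have ne: "w' \<noteq> []" by auto
    define w where "w = butlast w'"
    define a where "a = last w'"
    have eq: "w' = w @ [a]" using ne by (simp add: w_def a_def)
    have lw: "length w = n" using len by (simp add: w_def)
    obtain x where x: "x \<in> D w'" using w' by (auto simp: Cset_def)
    then have "x \<in> D (w @ [a])" using eq by simp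
    then have x2: "x \<in> D w" "in_region p v (orbit v (nth w) x (length w)) a"
      using D_snoc[of x w a] by simp_all
    have "w \<in> Cset n" using x2 lw by (auto simp: Cset_def)
    moreover have "a \<in> A w" using x2 by (auto simp: A_def in_region_def)
    ultimately have "(w, a) \<in> (SIGMA w:Cset n. A w)" by blast
    then show "w' \<in> (\<lambda>(w, a). w @ [a]) ` (SIGMA w:Cset n. A w)"
      by (rule image_eqI[rotated]) (simp add: eq)
  qed
  have fA: "finite (A w)" for w by (rule finite_subset[of _ "{..<p}"]) (auto simp: A_def)
  have fin: "finite (SIGMA w:Cset n. A w)"
    using finite_Cset fA by (intro finite_SigmaI)
  have "card (Cset (Suc n)) \<le> card ((\<lambda>(w, a). w @ [a]) ` (SIGMA w:Cset n. A w))"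
    using sub fin by (intro card_mono) (rule finite_imageI)
  also have "\<dots> \<le> card (SIGMA w:Cset n. A w)" by (rule card_image_le[OF fin])
  also have "\<dots> = (\<Sum>w\<in>Cset n. card (A w))"
    using finite_Cset fA by (intro card_SigmaI) auto
  finally show ?thesis .
qed

lemma Xc_convex: assumes "Xc q0 a" "Xc q1 a" "0 \<le> t" "t \<le> 1"
  shows "Xc (q0 + of_real t * (q1 - q0)) a"
  unfolding Xc_def
proof (intro allI impI)
  fix j assume j: "j < p" "j \<noteq> a"
  have A0: "0 < cross (v a - q0) (v j - v a)" using assms j by (simp add: Xc_def)
  have A1: "0 < cross (v a - q1) (v j - v a)" using assms j by (simp add: Xc_def)
  have eq: "v a - (q0 + of_real t * (q1 - q0)) = of_real (1 - t) * (v a - q0) + of_real t * (v a - q1)"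
    by (simp add: algebra_simps)
  have c: "cross (v a - (q0 + of_real t * (q1 - q0))) (v j - v a) =
      (1 - t) * cross (v a - q0) (v j - v a) + t * cross (v a - q1) (v j - v a)"
    unfolding eq cross_add_left cross_scale_left by (rule refl)
  have g1: "0 \<le> (1 - t) * cross (v a - q0) (v j - v a)" using A0 assms by simp
  have g2: "0 \<le> t * cross (v a - q1) (v j - v a)" using A1 assms by simp
  have "0 < (1 - t) * cross (v a - q0) (v j - v a) \<or> 0 < t * cross (v a - q1) (v j - v a)"
  proof (cases "t = 1")
    case True then show ?thesis using A1 by simp
  next
    case False then show ?thesis using A0 assms by simp
  qed
  then show "0 < cross (v a - (q0 + of_real t * (q1 - q0))) (v j - v a)" using c g1 g2 by linarith
qed

lemma D_convex: assumes "x0 \<in> D w" "x1 \<in> D w" "0 \<le> t" "t \<le> 1"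
  shows "x0 + of_real t * (x1 - x0) \<in> D w"
  unfolding D_def
proof (intro CollectI allI impI)
  fix k assume k: "k < length w"
  have i0: "in_region p v (orbit v (nth w) x0 k) (w ! k)" using assms(1) k by (simp add: D_def)
  have i1: "in_region p v (orbit v (nth w) x1 k) (w ! k)" using assms(2) k by (simp add: D_def)
  show "in_region p v (orbit v ((!) w) (x0 + complex_of_real t * (x1 - x0)) k) (w ! k)"
    unfolding orbit_affine using i0 i1 Xc_convex assms(3,4) by (simp add: in_region_iff)
qed

lemma phi_inj:
  assumes lw: "length w = n" and lw': "length w' = n" and x: "x \<in> D w" and x': "x' \<in> D w'"
    and eq: "orbit v (nth w) x n = orbit v (nth w') x' n"
  shows "w = w'"
proof -
  have "m \<le> n \<Longrightarrow> orbit v (nth w) x (n - m) = orbit v (nth w') x' (n - m) \<and>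
      (\<forall>i. n - m \<le> i \<and> i < n \<longrightarrow> w ! i = w' ! i)" for m
  proof (induction m)
    case 0 then show ?case using eq by auto
  next
    case (Suc m)
    define k where "k = n - Suc m"
    have k: "k < n" "Suc k = n - m" using Suc.prems by (auto simp: k_def)
    have IH: "orbit v (nth w) x (Suc k) = orbit v (nth w') x' (Suc k)"
      "\<forall>i. Suc k \<le> i \<and> i < n \<longrightarrow> w ! i = w' ! i"
      using Suc.IH Suc.prems k by auto
    have r1: "in_region p v (orbit v (nth w) x k) (w ! k)" using x k lw by (simp add: D_def)
    have r2: "in_region p v (orbit v (nth w') x' k) (w' ! k)" using x' k lw' by (simp add: D_def)
    have y1: "Yc (orbit v (nth w) x (Suc k)) (w ! k)" using r1 by (simp add: in_region_iff Xc_Yc)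
    have y2: "Yc (orbit v (nth w') x' (Suc k)) (w' ! k)" using r2 by (simp add: in_region_iff Xc_Yc)
    have wk: "w ! k = w' ! k" using Yc_disj y1 y2 IH(1) r1 r2 by (simp add: in_region_def)
    have ok: "orbit v (nth w) x k = orbit v (nth w') x' k" using IH(1) wk by simp
    show ?case
    proof
      show "orbit v ((!) w) x (n - Suc m) = orbit v ((!) w') x' (n - Suc m)" using ok k_def by simp
      show "\<forall>i. n - Suc m \<le> i \<and> i < n \<longrightarrow> w ! i = w' ! i"
      proof (intro allI impI)
        fix i assume i: "n - Suc m \<le> i \<and> i < n"
        show "w ! i = w' ! i"
        proof (cases "i = k")
          case True then show ?thesis using wk by simp
        next
          case False then show ?thesis using IH(2) i k_def by auto
        qed
      qed
    qed
  qed
  from this[of n] have "\<forall>i<n. w ! i = w' ! i" by auto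
  then show ?thesis using lw lw' by (intro nth_equalityI) auto
qed

end

lemma continuous_on_cross[continuous_intros]:
  assumes "continuous_on S f" "continuous_on S g"
  shows "continuous_on S (\<lambda>x. cross (f x) (g x))"
  unfolding cross_eq by (intro continuous_intros assms)

context poly begin

lemma open_Xc: "open {q. Xc q c}"
proof -
  have eq: "{q. Xc q c} = (\<Inter>j\<in>{j. j < p \<and> j \<noteq> c}. {q. 0 < cross (v c - q) (v j - v c)})"
    by (auto simp: Xc_def)
  show ?thesis unfolding eq
    by (intro open_INT ballI open_Collect_less continuous_intros) auto
qed

lemma open_Wn: "open (Wn c)"
proof -
  have eq: "Wn c = {q. L (pv c) q < 0} \<inter> {q. 0 < L (nx c) q}" by (auto simp: Wn_def)
  show ?thesis unfolding eq L_def
    by (intro open_Int open_Collect_less continuous_intros)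
qed

definition pos :: "nat \<Rightarrow> nat \<Rightarrow> nat" where "pos z c = (c + (p - Suc z)) mod p"
definition ipos :: "nat \<Rightarrow> nat \<Rightarrow> nat" where "ipos z m = (m + Suc z) mod p"

lemma pos_lt: "pos z c < p" using p3 by (simp add: pos_def)
lemma ipos_lt: "ipos z m < p" using p3 by (simp add: ipos_def)
lemma ipos_pos: assumes "z < p" "c < p" shows "ipos z (pos z c) = c"
proof -
  have "ipos z (pos z c) = ((c + (p - Suc z)) mod p + Suc z) mod p"
    unfolding ipos_def pos_def by (rule refl)
  also have "\<dots> = (c + (p - Suc z) + Suc z) mod p" by (rule mod_add_left_eq)
  also have "c + (p - Suc z) + Suc z = c + p" using assms by simp
  finally show ?thesis using assms by simp
qed
lemma pos_ipos: assumes "z < p" "m < p" shows "pos z (ipos z m) = m"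
proof -
  have "pos z (ipos z m) = (m + Suc z + (p - Suc z)) mod p"
    by (simp add: ipos_def pos_def mod_add_left_eq)
  also have "m + Suc z + (p - Suc z) = m + p" using assms by simp
  finally show ?thesis using assms by simp
qed
lemma pos_z: assumes "z < p" shows "pos z z = p - 1"
proof -
  have "z + (p - Suc z) = p - 1" using assms by simp
  then show ?thesis using assms by (simp add: pos_def)
qed
lemma pos_nx: assumes "c < p" "pos z c < p - 1" shows "pos z (nx c) = Suc (pos z c)"
proof -
  have "pos z (nx c) = (Suc c + (p - Suc z)) mod p" by (simp add: pos_def nx_def mod_add_left_eq)
  also have "\<dots> = Suc (c + (p - Suc z)) mod p" by simp
  also have "\<dots> = Suc (pos z c) mod p" by (simp add: pos_def mod_Suc_eq)
  also have "\<dots> = Suc (pos z c)" using assms by simp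
  finally show ?thesis .
qed
lemma pos_inj: assumes "z < p" "c < p" "d < p" "pos z c = pos z d" shows "c = d"
  using ipos_pos assms by metis

lemma key_claim:
  fixes E :: "complex set"
  assumes seg: "\<And>q0 q1 t. q0 \<in> E \<Longrightarrow> q1 \<in> E \<Longrightarrow> 0 \<le> t \<Longrightarrow> t \<le> 1 \<Longrightarrow> q0 + of_real t * (q1 - q0) \<in> E"
    and cov: "\<And>q. q \<in> E \<Longrightarrow> \<exists>c<p. Xc q c \<or> q \<in> ray c"
    and z: "z < p" and zE: "\<And>q. q \<in> E \<Longrightarrow> q \<notin> ray z"
    and a: "a < p" "q0 \<in> E" "Xc q0 a" and b: "b < p" "q1 \<in> E" "Xc q1 b"
    and m: "pos z a \<le> m" "m < pos z b"
  shows "\<exists>q\<in>E. q \<in> ray (ipos z m)"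
proof (rule ccontr)
  assume nh: "\<not> (\<exists>q\<in>E. q \<in> ray (ipos z m))"
  define cm where "cm = ipos z m"
  have mp: "m < p" using m pos_lt[of z b] by linarith
  have pcm: "pos z cm = m" using pos_ipos z mp by (simp add: cm_def)
  define U where "U = (\<Union>c\<in>{c. c < p \<and> pos z c \<le> m}. {q. Xc q c}) \<union> (\<Union>c\<in>{c. c < p \<and> pos z c < m}. Wn c)"
  define V where "V = (\<Union>c\<in>{c. c < p \<and> m < pos z c}. {q. Xc q c}) \<union>
     (\<Union>c\<in>{c. c < p \<and> m < pos z c \<and> pos z c < p - 1}. Wn c)"
  have oU: "open U" unfolding U_def using open_Xc open_Wn by (intro open_Un open_UN) auto
  have oV: "open V" unfolding V_def using open_Xc open_Wn by (intro open_Un open_UN) auto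
  define \<gamma> where "\<gamma> t = q0 + of_real t * (q1 - q0)" for t :: real
  have cg: "continuous (at t) \<gamma>" for t unfolding \<gamma>_def by (intro continuous_intros)
  have oU': "open (\<gamma> -` U)" by (rule continuous_open_vimage[OF oU cg])
  have oV': "open (\<gamma> -` V)" by (rule continuous_open_vimage[OF oV cg])
  have Uchar: "\<exists>c<p. pos z c \<le> m \<and> (Xc q c \<or> (q \<in> ray c \<and> pos z c < m))" if "q \<in> U" for q
  proof -
    consider (X) c where "c < p" "pos z c \<le> m" "Xc q c" | (W) c where "c < p" "pos z c < m" "q \<in> Wn c"
      using \<open>q \<in> U\<close> unfolding U_def by blast
    then show ?thesis
    proof cases
      case X then show ?thesis by blast
    next
      case W
      have pn: "pos z (nx c) = Suc (pos z c)" using pos_nx W mp by simp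
      from Wn_split[OF W(1) W(3)] consider "Xc q c" | "q \<in> ray c" | "Xc q (nx c)" by blast
      then show ?thesis
      proof cases
        case 1 then show ?thesis using W by (intro exI[of _ c]) auto
      next
        case 2 then show ?thesis using W by (intro exI[of _ c]) auto
      next
        case 3 then show ?thesis using W pn nx_lt[of c] by (intro exI[of _ "nx c"]) auto
      qed
    qed
  qed
  have Vchar: "\<exists>c<p. m < pos z c \<and> (Xc q c \<or> q \<in> ray c)" if "q \<in> V" for q
  proof -
    consider (X) c where "c < p" "m < pos z c" "Xc q c" | (W) c where "c < p" "m < pos z c" "pos z c < p - 1" "q \<in> Wn c"
      using \<open>q \<in> V\<close> unfolding V_def by blast
    then show ?thesis
    proof cases
      case X then show ?thesis by blast
    next
      case W
      have pn: "pos z (nx c) = Suc (pos z c)" using pos_nx W by simp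
      from Wn_split[OF W(1) W(4)] consider "Xc q c" | "q \<in> ray c" | "Xc q (nx c)" by blast
      then show ?thesis
      proof cases
        case 1 then show ?thesis using W by (intro exI[of _ c]) auto
      next
        case 2 then show ?thesis using W by (intro exI[of _ c]) auto
      next
        case 3 then show ?thesis using W pn nx_lt[of c] by (intro exI[of _ "nx c"]) auto
      qed
    qed
  qed
  have disj: "U \<inter> V = {}"
  proof (rule ccontr)
    assume "U \<inter> V \<noteq> {}"
    then obtain q where q: "q \<in> U" "q \<in> V" by blast
    obtain c where c: "c < p" "pos z c \<le> m" "Xc q c \<or> (q \<in> ray c \<and> pos z c < m)" using Uchar q(1) by blast
    obtain d where d: "d < p" "m < pos z d" "Xc q d \<or> q \<in> ray d" using Vchar q(2) by blast
    have cd: "c \<noteq> d" using c d by auto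
    show False
    proof (cases "Xc q c")
      case True
      then show False using d cd Xc_disj[OF c(1) d(1) True] ray_X_disj[OF d(1) c(1)] by blast
    next
      case False
      then have rc: "q \<in> ray c" using c by blast
      show False using d ray_X_disj[OF c(1) d(1) rc] ray_ray_disj[OF c(1) d(1) cd rc] by blast
    qed
  qed
  have cover: "{0..1} \<subseteq> \<gamma> -` U \<union> \<gamma> -` V"
  proof
    fix t :: real assume t: "t \<in> {0..1}"
    have gE: "\<gamma> t \<in> E" using seg[OF a(2) b(2)] t by (simp add: \<gamma>_def)
    obtain c where c: "c < p" "Xc (\<gamma> t) c \<or> \<gamma> t \<in> ray c" using cov[OF gE] by blast
    show "t \<in> \<gamma> -` U \<union> \<gamma> -` V"
    proof (cases "Xc (\<gamma> t) c")
      case True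
      then show ?thesis using c(1) unfolding U_def V_def by (cases "pos z c \<le> m") auto
    next
      case False
      then have r: "\<gamma> t \<in> ray c" using c by blast
      have "c \<noteq> z" using zE gE r by blast
      then have pz: "pos z c \<noteq> p - 1" using pos_inj[OF z c(1) z] pos_z[OF z] by auto
      have "c \<noteq> cm" using nh gE r by (auto simp: cm_def)
      then have pm: "pos z c \<noteq> m" using pos_inj[OF z c(1)] pcm ipos_lt[of z m] by (metis cm_def)
      have pl: "pos z c < p" by (rule pos_lt)
      have rW: "\<gamma> t \<in> Wn c" using ray_Wn[OF c(1)] r by blast
      show ?thesis
      proof (cases "pos z c < m")
        case True then show ?thesis using rW c(1) unfolding U_def by blast
      next
        case False
        then have "m < pos z c" "pos z c < p - 1" using pm pz pl by auto
        then show ?thesis using rW c(1) unfolding V_def by blast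
      qed
    qed
  qed
  have "\<gamma> -` U \<inter> {0..1} = {} \<or> \<gamma> -` V \<inter> {0..1} = {}"
    by (rule connectedD[OF connected_Icc oU' oV']) (use disj cover in auto)
  moreover have "0 \<in> \<gamma> -` U" using a m unfolding U_def \<gamma>_def by auto
  moreover have "1 \<in> \<gamma> -` V" using b m unfolding V_def \<gamma>_def by auto
  ultimately show False by auto
qed

lemma L_abstract:
  fixes E :: "complex set"
  assumes seg: "\<And>q0 q1 t. q0 \<in> E \<Longrightarrow> q1 \<in> E \<Longrightarrow> 0 \<le> t \<Longrightarrow> t \<le> 1 \<Longrightarrow> q0 + of_real t * (q1 - q0) \<in> E"
    and cov: "\<And>q. q \<in> E \<Longrightarrow> \<exists>c<p. Xc q c \<or> q \<in> ray c"
  shows "card {a. a < p \<and> (\<exists>q\<in>E. Xc q a)} \<le> Suc (card {c. c < p \<and> (\<exists>q\<in>E. q \<in> ray c)})"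
proof -
  define As where "As = {a. a < p \<and> (\<exists>q\<in>E. Xc q a)}"
  define Rs where "Rs = {c. c < p \<and> (\<exists>q\<in>E. q \<in> ray c)}"
  have As_sub: "As \<subseteq> {..<p}" by (auto simp: As_def)
  have Rs_sub: "Rs \<subseteq> {..<p}" by (auto simp: Rs_def)
  have "card As \<le> Suc (card Rs)"
  proof (cases "Rs = {..<p}")
    case True
    have "card As \<le> card {..<p}" using As_sub by (intro card_mono) auto
    then show ?thesis using True by simp
  next
    case False
    then obtain z where z: "z < p" "z \<notin> Rs" using Rs_sub by blast
    have zE: "\<And>q. q \<in> E \<Longrightarrow> q \<notin> ray z" using z by (auto simp: Rs_def)
    show ?thesis
    proof (cases "As = {}")
      case True then show ?thesis by simp
    next
      case False
      have fA: "finite As" using As_sub finite_subset by blast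
      define PA where "PA = pos z ` As"
      have fPA: "finite PA" "PA \<noteq> {}" using fA False by (auto simp: PA_def)
      define m0 where "m0 = Min PA"
      define m1 where "m1 = Max PA"
      obtain a0 where a0: "a0 \<in> As" "pos z a0 = m0" using Min_in[OF fPA] by (auto simp: m0_def PA_def)
      obtain b0 where b0: "b0 \<in> As" "pos z b0 = m1" using Max_in[OF fPA] by (auto simp: m1_def PA_def)
      have m1p: "m1 < p" using b0 pos_lt by auto
      have sub1: "As \<subseteq> ipos z ` {m0..m1}"
      proof
        fix a assume a: "a \<in> As"
        have "pos z a \<in> PA" using a by (simp add: PA_def)
        then have "m0 \<le> pos z a" "pos z a \<le> m1" using fPA by (auto simp: m0_def m1_def)
        moreover have "a = ipos z (pos z a)" using ipos_pos z a by (simp add: As_def)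
        ultimately show "a \<in> ipos z ` {m0..m1}" by auto
      qed
      have sub2: "ipos z ` {m0..<m1} \<subseteq> Rs"
      proof
        fix c assume "c \<in> ipos z ` {m0..<m1}"
        then obtain m where m: "m0 \<le> m" "m < m1" "c = ipos z m" by auto
        obtain qa where qa: "qa \<in> E" "Xc qa a0" using a0 by (auto simp: As_def)
        obtain qb where qb: "qb \<in> E" "Xc qb b0" using b0 by (auto simp: As_def)
        have "\<exists>q\<in>E. q \<in> ray (ipos z m)"
          using key_claim[OF seg cov z(1) zE _ qa _ qb] a0 b0 m by (auto simp: As_def)
        then show "c \<in> Rs" using m ipos_lt by (auto simp: Rs_def)
      qed
      have inj: "inj_on (ipos z) {m0..<m1}"
        using pos_ipos[OF z(1)] m1p by (intro inj_on_inverseI[of _ "pos z"]) auto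
      have "card As \<le> card (ipos z ` {m0..m1})" using sub1 by (intro card_mono) auto
      also have "\<dots> \<le> card {m0..m1}" by (rule card_image_le) auto
      also have "\<dots> = Suc m1 - m0" by simp
      also have "\<dots> \<le> Suc (m1 - m0)" by simp
      also have "m1 - m0 = card (ipos z ` {m0..<m1})" using card_image[OF inj] by simp
      also have "card (ipos z ` {m0..<m1}) \<le> card Rs"
        using sub2 finite_subset[OF Rs_sub] by (intro card_mono) auto
      finally show ?thesis by simp
    qed
  qed
  then show ?thesis unfolding As_def Rs_def .
qed

end

lemma inf_interval:
  fixes \<alpha> \<beta> :: "'i \<Rightarrow> real" and I :: "'i set"
  defines "\<Omega> \<equiv> {s. 0 < s \<and> (\<forall>i\<in>I. 0 < \<alpha> i + \<beta> i * s)}"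
  assumes s0: "s0 \<in> \<Omega>" and s: "Inf \<Omega> < s" "s \<le> s0"
  shows "s \<in> \<Omega>"
proof -
  have ne: "\<Omega> \<noteq> {}" using s0 by blast
  have bdd: "bdd_below \<Omega>" by (rule bdd_belowI[of _ 0]) (auto simp: \<Omega>_def)
  have g0: "0 \<le> Inf \<Omega>" by (rule cInf_greatest[OF ne]) (auto simp: \<Omega>_def)
  obtain s1 where s1: "s1 \<in> \<Omega>" "s1 < s" using cInf_less_iff[OF ne bdd] s(1) by blast
  have "0 < \<alpha> i + \<beta> i * s" if i: "i \<in> I" for i
  proof -
    have f1: "0 < \<alpha> i + \<beta> i * s1" using s1 i by (auto simp: \<Omega>_def)
    have f0: "0 < \<alpha> i + \<beta> i * s0" using s0 i by (auto simp: \<Omega>_def)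
    show ?thesis
    proof (cases "0 \<le> \<beta> i")
      case True
      then have "\<beta> i * s1 \<le> \<beta> i * s" using s1 by (intro mult_left_mono) auto
      then show ?thesis using f1 by linarith
    next
      case False
      then have "\<beta> i * s0 \<le> \<beta> i * s" using s by (intro mult_left_mono_neg) auto
      then show ?thesis using f0 by linarith
    qed
  qed
  moreover have "0 < s" using g0 s by linarith
  ultimately show ?thesis by (auto simp: \<Omega>_def)
qed

lemma inf_root:
  fixes \<alpha> \<beta> :: "'i \<Rightarrow> real" and I :: "'i set"
  defines "\<Omega> \<equiv> {s. 0 < s \<and> (\<forall>i\<in>I. 0 < \<alpha> i + \<beta> i * s)}"
  assumes fin: "finite I" and s0: "s0 \<in> \<Omega>"
  shows "Inf \<Omega> \<notin> \<Omega> \<and> (Inf \<Omega> = 0 \<or> (\<exists>i\<in>I. \<beta> i \<noteq> 0 \<and> Inf \<Omega> = - \<alpha> i / \<beta> i))"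
proof -
  define \<sigma> where "\<sigma> = Inf \<Omega>"
  have ne: "\<Omega> \<noteq> {}" using s0 by blast
  have bdd: "bdd_below \<Omega>" by (rule bdd_belowI[of _ 0]) (auto simp: \<Omega>_def)
  have g0: "0 \<le> \<sigma>" unfolding \<sigma>_def by (rule cInf_greatest[OF ne]) (auto simp: \<Omega>_def)
  have low: "\<sigma> \<le> s" if "s \<in> \<Omega>" for s unfolding \<sigma>_def by (rule cInf_lower[OF that bdd])
  have int: "s \<in> \<Omega>" if "\<sigma> < s" "s \<le> s0" for s
  proof -
    have A1: "s0 \<in> {s. 0 < s \<and> (\<forall>i\<in>I. 0 < \<alpha> i + \<beta> i * s)}" using s0 unfolding \<Omega>_def .
    have A2: "Inf {s. 0 < s \<and> (\<forall>i\<in>I. 0 < \<alpha> i + \<beta> i * s)} < s" using that(1) unfolding \<sigma>_def \<Omega>_def .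
    show ?thesis unfolding \<Omega>_def by (rule inf_interval[OF A1 A2 that(2)])
  qed
  have main: "\<exists>i\<in>I. \<beta> i \<noteq> 0 \<and> \<alpha> i + \<beta> i * \<sigma> = 0" if sp: "0 < \<sigma>"
  proof (rule ccontr)
    assume nh: "\<not> (\<exists>i\<in>I. \<beta> i \<noteq> 0 \<and> \<alpha> i + \<beta> i * \<sigma> = 0)"
    have pos: "0 < \<alpha> i + \<beta> i * \<sigma>" if i: "i \<in> I" for i
    proof (rule ccontr)
      assume "\<not> 0 < \<alpha> i + \<beta> i * \<sigma>"
      then have le: "\<alpha> i + \<beta> i * \<sigma> \<le> 0" by simp
      have f0: "0 < \<alpha> i + \<beta> i * s0" using s0 i by (auto simp: \<Omega>_def)
      have ss: "\<sigma> \<le> s0" using low s0 by blast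
      show False
      proof (cases "\<alpha> i + \<beta> i * \<sigma> = 0")
        case True
        then have "\<beta> i = 0" using nh i by blast
        then show False using True f0 by simp
      next
        case False
        then have lt: "\<alpha> i + \<beta> i * \<sigma> < 0" using le by simp
        have "\<beta> i * (s0 - \<sigma>) > 0" using lt f0 by (simp add: algebra_simps)
        have sl: "\<sigma> < s0" using ss lt f0 by (cases "\<sigma> = s0") auto
        have bp: "0 < \<beta> i" using \<open>\<beta> i * (s0 - \<sigma>) > 0\<close> sl by (simp add: zero_less_mult_iff)
        define r where "r = - \<alpha> i / \<beta> i"
        have fr: "\<alpha> i + \<beta> i * r = 0" using bp by (simp add: r_def)
        have "\<beta> i * \<sigma> < \<beta> i * r" using lt fr by linarith
        then have r1: "\<sigma> < r" using bp by simp
        have "\<beta> i * r < \<beta> i * s0" using f0 fr by linarith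
        then have r2: "r < s0" using bp by simp
        have "r \<in> \<Omega>" using int r1 r2 by simp
        then show False using fr i by (auto simp: \<Omega>_def)
      qed
    qed
    define Op where "Op = (\<Inter>i\<in>I. {s. 0 < \<alpha> i + \<beta> i * s})"
    have oO: "open Op" unfolding Op_def
      by (intro open_INT fin ballI open_Collect_less continuous_intros)
    have sO: "\<sigma> \<in> Op" using pos by (auto simp: Op_def)
    obtain \<epsilon> where e: "0 < \<epsilon>" "\<forall>y. dist y \<sigma> < \<epsilon> \<longrightarrow> y \<in> Op"
      using oO sO unfolding open_dist by blast
    define s where "s = \<sigma> - min \<epsilon> \<sigma> / 2"
    have "dist s \<sigma> < \<epsilon>" using e sp by (simp add: s_def dist_real_def)
    then have "s \<in> Op" using e by blast
    moreover have "0 < s" using sp e by (simp add: s_def)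
    ultimately have "s \<in> \<Omega>" by (auto simp: Op_def \<Omega>_def)
    moreover have "s < \<sigma>" using sp e by (simp add: s_def)
    ultimately show False using low[of s] by linarith
  qed
  have "\<sigma> \<notin> \<Omega> \<and> (\<sigma> = 0 \<or> (\<exists>i\<in>I. \<beta> i \<noteq> 0 \<and> \<sigma> = - \<alpha> i / \<beta> i))"
  proof (cases "\<sigma> = 0")
    case True
    have "\<not> 0 < \<sigma>" using True by simp
    then have "\<sigma> \<notin> \<Omega>" unfolding \<Omega>_def by blast
    then show ?thesis using True by blast
  next
    case False
    then have sp: "0 < \<sigma>" using g0 by simp
    obtain i where i: "i \<in> I" "\<beta> i \<noteq> 0" "\<alpha> i + \<beta> i * \<sigma> = 0" using main[OF sp] by blast
    have "\<sigma> \<notin> \<Omega>" using i unfolding \<Omega>_def by force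
    moreover have "\<sigma> = - \<alpha> i / \<beta> i"
    proof -
      have "\<beta> i * \<sigma> = - \<alpha> i" using i(3) by linarith
      then have "\<sigma> * \<beta> i = - \<alpha> i" by (simp add: mult.commute)
      then have "\<sigma> = (- \<alpha> i) / \<beta> i" using i(2) by (subst eq_divide_eq) simp
      then show ?thesis by simp
    qed
    ultimately show ?thesis using i by blast
  qed
  then show ?thesis unfolding \<sigma>_def .
qed


lemma neg_one_sq: "(-1::complex)^n * (-1)^n = 1"
  by (induction n) auto

lemma neg_one_pow: "(-1::complex)^n \<in> {1, -1}"
  by (induction n) auto

context poly begin

definition ray_pt :: "nat \<Rightarrow> real \<Rightarrow> complex" where "ray_pt c s = v c - of_real s * e c"
definition tau :: "nat list \<Rightarrow> nat \<Rightarrow> complex" where "tau w k = orbit v (nth w) 0 k"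
definition Bset :: "nat \<Rightarrow> complex set" where
  "Bset N = {\<Sum>i<p. of_int (\<kappa> i) * (2 * v i) | \<kappa>. \<forall>i. \<bar>\<kappa> i\<bar> \<le> int N}"
definition root :: "nat \<Rightarrow> nat \<Rightarrow> nat \<Rightarrow> complex \<Rightarrow> complex \<Rightarrow> real" where
  "root c a j \<epsilon> t = - cross (v a - \<epsilon> * v c - t) (v j - v a) / cross (\<epsilon> * e c) (v j - v a)"
definition Sig :: "nat \<Rightarrow> nat \<Rightarrow> real set" where
  "Sig n c = (\<lambda>(a, j, \<epsilon>, t). root c a j \<epsilon> t) ` ({..<p} \<times> {..<p} \<times> {1, -1} \<times> Bset (2 * n))"
definition Rset :: "nat list \<Rightarrow> nat set" where
  "Rset w = {c. c < p \<and> (\<exists>x\<in>D w. orbit v (nth w) x (length w) \<in> ray c)}"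

lemma ray_pt_ray: "0 < s \<Longrightarrow> ray_pt c s \<in> ray c"
  by (auto simp: ray_pt_def ray_def)

lemma ray_ray_pt: "q \<in> ray c \<Longrightarrow> \<exists>s>0. q = ray_pt c s"
  by (auto simp: ray_pt_def ray_def)

lemma card_A_le: assumes w: "w \<in> Cset n" shows "card (A w) \<le> Suc (card (Rset w))"
proof (cases n)
  case 0
  then have w0: "w = []" using w by (simp add: Cset_def)
  have "Rset w = {..<p}"
  proof (intro set_eqI iffI)
    fix c assume "c \<in> {..<p}"
    moreover have "ray_pt c 1 \<in> D w" using w0 by (simp add: D_def)
    moreover have "orbit v (nth w) (ray_pt c 1) (length w) \<in> ray c" using w0 ray_pt_ray by simp
    ultimately show "c \<in> Rset w" by (auto simp: Rset_def)
  qed (auto simp: Rset_def)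
  moreover have "card (A w) \<le> card {..<p}" by (intro card_mono) (auto simp: A_def)
  ultimately show ?thesis by simp
next
  case (Suc k)
  have lw: "length w = Suc k" using w Suc by (simp add: Cset_def)
  define \<phi> where "\<phi> x = orbit v (nth w) x (length w)" for x
  define E where "E = \<phi> ` D w"
  have seg: "q0 + of_real t * (q1 - q0) \<in> E" if h: "q0 \<in> E" "q1 \<in> E" "0 \<le> t" "t \<le> 1" for q0 q1 t
  proof -
    obtain x0 where x0: "x0 \<in> D w" "q0 = \<phi> x0" using h(1) unfolding E_def by blast
    obtain x1 where x1: "x1 \<in> D w" "q1 = \<phi> x1" using h(2) unfolding E_def by blast
    note x = x0(1) x1(1) x0(2) x1(2)
    have "\<phi> (x0 + of_real t * (x1 - x0)) = q0 + of_real t * (q1 - q0)"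
      unfolding \<phi>_def orbit_affine using x by (simp add: \<phi>_def)
    moreover have "x0 + of_real t * (x1 - x0) \<in> D w" using D_convex x h(3,4) by blast
    ultimately show ?thesis unfolding E_def by (rule image_eqI[OF sym])
  qed
  have cov: "\<exists>c<p. Xc q c \<or> q \<in> ray c" if hq: "q \<in> E" for q
  proof -
    obtain x where x: "x \<in> D w" "q = \<phi> x" using hq unfolding E_def by blast
    have "in_region p v (orbit v (nth w) x k) (w ! k)" using x lw by (simp add: D_def)
    then have r: "w ! k < p" "Xc (orbit v (nth w) x k) (w ! k)" by (simp_all add: in_region_iff)
    have "q = 2 * v (w ! k) - orbit v (nth w) x k" using x lw by (simp add: \<phi>_def)
    then have "Yc q (w ! k)" using r Xc_Yc by simp
    then show ?thesis using Yc_cover r(1) by blast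
  qed
  have eqA: "A w = {a. a < p \<and> (\<exists>q\<in>E. Xc q a)}"
    unfolding A_def E_def \<phi>_def in_region_iff by blast
  have eqR: "Rset w = {c. c < p \<and> (\<exists>q\<in>E. q \<in> ray c)}"
    unfolding Rset_def E_def \<phi>_def by blast
  show ?thesis unfolding eqA eqR by (rule L_abstract[OF seg cov])
qed

lemma Bset_I: "(\<And>i. \<bar>\<kappa> i\<bar> \<le> int N) \<Longrightarrow> t = (\<Sum>i<p. of_int (\<kappa> i) * (2 * v i)) \<Longrightarrow> t \<in> Bset N"
  unfolding Bset_def by blast

lemma Bset_E: "t \<in> Bset N \<Longrightarrow> \<exists>\<kappa>. (\<forall>i. \<bar>\<kappa> i\<bar> \<le> int N) \<and> t = (\<Sum>i<p. of_int (\<kappa> i) * (2 * v i))"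
  unfolding Bset_def by blast

lemma Bset_mono: assumes "M \<le> N" shows "Bset M \<subseteq> Bset N"
proof
  fix t assume "t \<in> Bset M"
  then obtain \<kappa> where k: "\<forall>i. \<bar>\<kappa> i\<bar> \<le> int M" "t = (\<Sum>i<p. of_int (\<kappa> i) * (2 * v i))"
    using Bset_E by blast
  have "\<bar>\<kappa> i\<bar> \<le> int N" for i using k(1)[rule_format, of i] assms by linarith
  then show "t \<in> Bset N" using k(2) by (rule Bset_I)
qed

lemma Bset_uminus: assumes "t \<in> Bset N" shows "- t \<in> Bset N"
proof -
  obtain \<kappa> where k: "\<forall>i. \<bar>\<kappa> i\<bar> \<le> int N" "t = (\<Sum>i<p. of_int (\<kappa> i) * (2 * v i))"
    using assms Bset_E by blast
  have "- t = (\<Sum>i<p. of_int (- \<kappa> i) * (2 * v i))" using k by (simp add: sum_negf[symmetric])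
  moreover have "\<bar>- \<kappa> i\<bar> \<le> int N" for i using k by simp
  ultimately show ?thesis using Bset_I[of "\<lambda>i. - \<kappa> i"] by blast
qed

lemma Bset_add: assumes "t \<in> Bset M" "t' \<in> Bset N" shows "t + t' \<in> Bset (M + N)"
proof -
  obtain \<kappa> where k: "\<forall>i. \<bar>\<kappa> i\<bar> \<le> int M" "t = (\<Sum>i<p. of_int (\<kappa> i) * (2 * v i))"
    using assms Bset_E by blast
  obtain \<kappa>' where k': "\<forall>i. \<bar>\<kappa>' i\<bar> \<le> int N" "t' = (\<Sum>i<p. of_int (\<kappa>' i) * (2 * v i))"
    using assms Bset_E by blast
  have "t + t' = (\<Sum>i<p. of_int (\<kappa> i + \<kappa>' i) * (2 * v i))"
    using k k' by (simp add: sum.distrib[symmetric] algebra_simps)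
  moreover have "\<bar>\<kappa> i + \<kappa>' i\<bar> \<le> int (M + N)" for i
  proof -
    have "\<bar>\<kappa> i + \<kappa>' i\<bar> \<le> \<bar>\<kappa> i\<bar> + \<bar>\<kappa>' i\<bar>" by (rule abs_triangle_ineq)
    moreover have "\<bar>\<kappa> i\<bar> \<le> int M" "\<bar>\<kappa>' i\<bar> \<le> int N" using k(1) k'(1) by blast+
    ultimately show ?thesis by simp
  qed
  ultimately show ?thesis using Bset_I[of "\<lambda>i. \<kappa> i + \<kappa>' i"] by blast
qed

lemma finite_Bset: "finite (Bset N)"
proof -
  define f where "f \<kappa> = (\<Sum>i<p. of_int (\<kappa> i) * (2 * v i))" for \<kappa> :: "nat \<Rightarrow> int"
  have "Bset N \<subseteq> f ` (PiE {..<p} (\<lambda>_. {- int N..int N}))"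
  proof
    fix t assume "t \<in> Bset N"
    then obtain \<kappa> where k: "\<forall>i. \<bar>\<kappa> i\<bar> \<le> int N" "t = f \<kappa>" by (auto simp: Bset_def f_def)
    have "f \<kappa> = f (restrict \<kappa> {..<p})" unfolding f_def by (intro sum.cong) auto
    moreover have "restrict \<kappa> {..<p} \<in> PiE {..<p} (\<lambda>_. {- int N..int N})"
    proof -
      have "\<kappa> i \<in> {- int N..int N}" for i
      proof -
        have "\<bar>\<kappa> i\<bar> \<le> int N" using k(1) by blast
        then show ?thesis by (simp add: abs_le_iff)
      qed
      then show ?thesis by auto
    qed
    ultimately show "t \<in> f ` (PiE {..<p} (\<lambda>_. {- int N..int N}))" using k(2) by blast
  qed
  moreover have "finite (f ` (PiE {..<p} (\<lambda>_. {- int N..int N})))"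
    by (intro finite_imageI finite_PiE) auto
  ultimately show ?thesis using finite_subset by blast
qed

lemma tau_B: assumes "set w \<subseteq> {..<p}" shows "k \<le> length w \<Longrightarrow> tau w k \<in> Bset k"
proof (induction k)
  case 0
  have "tau w 0 = (\<Sum>i<p. of_int ((\<lambda>_. 0) i) * (2 * v i))" by (simp add: tau_def)
  then show ?case by (intro Bset_I[of "\<lambda>_. 0"]) auto
next
  case (Suc k)
  then have "tau w k \<in> Bset k" by simp
  then obtain \<kappa> where k: "\<forall>i. \<bar>\<kappa> i\<bar> \<le> int k" "tau w k = (\<Sum>i<p. of_int (\<kappa> i) * (2 * v i))"
    using Bset_E by blast
  define a where "a = w ! k"
  have "k < length w" using Suc.prems by simp
  then have "w ! k \<in> set w" by (rule nth_mem)
  then have a: "a < p" using assms unfolding a_def by blast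
  define \<kappa>' where "\<kappa>' i = (if i = a then 1 else 0) - \<kappa> i" for i
  have "tau w (Suc k) = 2 * v a - tau w k" by (simp add: tau_def a_def)
  also have "\<dots> = (\<Sum>i<p. (if i = a then 2 * v i else 0)) - (\<Sum>i<p. of_int (\<kappa> i) * (2 * v i))"
    using a k by simp
  also have "\<dots> = (\<Sum>i<p. (if i = a then 2 * v i else 0) - of_int (\<kappa> i) * (2 * v i))"
    by (rule sum_subtractf[symmetric])
  also have "\<dots> = (\<Sum>i<p. of_int (\<kappa>' i) * (2 * v i))"
  proof (rule sum.cong[OF refl])
    fix i show "(if i = a then 2 * v i else 0) - of_int (\<kappa> i) * (2 * v i) = of_int (\<kappa>' i) * (2 * v i)"
      by (cases "i = a") (simp_all add: \<kappa>'_def algebra_simps)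
  qed
  finally have "tau w (Suc k) = (\<Sum>i<p. of_int (\<kappa>' i) * (2 * v i))" .
  moreover have "\<bar>\<kappa>' i\<bar> \<le> int (Suc k)" for i
    using k(1)[rule_format, of i] by (auto simp: \<kappa>'_def)
  ultimately show ?case using Bset_I[of \<kappa>'] by blast
qed

end

context poly begin

definition Sw :: "nat \<Rightarrow> nat list \<Rightarrow> real set" where
  "Sw c w = {s. 0 < s \<and> (\<exists>x\<in>D w. orbit v (nth w) x (length w) = ray_pt c s)}"

lemma orbit_tau: "orbit v (nth w) x k = (-1)^k * x + tau w k"
  unfolding tau_def by (rule orbit_formula)

lemma Cset_letters: "w \<in> Cset n \<Longrightarrow> set w \<subseteq> {..<p}"
  using D_letters by (auto simp: Cset_def)

lemma nth_lt: assumes "set w \<subseteq> {..<p}" "k < length w" shows "w ! k < p"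
proof -
  have "w ! k \<in> set w" using assms(2) by (rule nth_mem)
  then have "w ! k \<in> {..<p}" using assms(1) by blast
  then show ?thesis by simp
qed

lemma Sw_eq:
  fixes c n :: nat and w :: "nat list"
  assumes w: "w \<in> Cset n"
  defines "eps \<equiv> \<lambda>k. (-1::complex)^k * (-1)^n"
  defines "tt \<equiv> \<lambda>k. tau w k - eps k * tau w n"
  defines "I \<equiv> {(k, j). k < n \<and> j < p \<and> j \<noteq> w ! k}"
  defines "al \<equiv> \<lambda>(k, j). cross (v (w ! k) - eps k * v c - tt k) (v j - v (w ! k))"
  defines "be \<equiv> \<lambda>(k, j). cross (eps k * e c) (v j - v (w ! k))"
  shows "Sw c w = {s. 0 < s \<and> (\<forall>i\<in>I. 0 < al i + be i * s)}"
proof -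
  have lw: "length w = n" using w by (simp add: Cset_def)
  have lt: "w ! k < p" if "k < n" for k using nth_lt[OF Cset_letters[OF w]] that lw by simp
  have key: "(\<exists>x\<in>D w. orbit v (nth w) x n = ray_pt c s) \<longleftrightarrow> (\<forall>i\<in>I. 0 < al i + be i * s)" for s
  proof -
    define q where "q = ray_pt c s"
    define xq where "xq = (-1)^n * (q - tau w n)"
    have e1: "(\<exists>x\<in>D w. orbit v (nth w) x n = q) \<longleftrightarrow> xq \<in> D w"
    proof
      assume "\<exists>x\<in>D w. orbit v (nth w) x n = q"
      then obtain x where x: "x \<in> D w" "orbit v (nth w) x n = q" by blast
      have "(-1)^n * x + tau w n = q" using x(2) orbit_tau[of w x n] by simp
      then have "q - tau w n = (-1)^n * x" by (simp add: algebra_simps)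
      then have "xq = (-1)^n * (-1)^n * x" by (simp add: xq_def)
      then have "xq = x" using neg_one_sq[of n] by simp
      then show "xq \<in> D w" using x by simp
    next
      assume "xq \<in> D w"
      moreover have "orbit v (nth w) xq n = q"
        unfolding orbit_tau xq_def using neg_one_sq[of n] by (simp add: mult.assoc[symmetric])
      ultimately show "\<exists>x\<in>D w. orbit v (nth w) x n = q" by blast
    qed
    have ok: "orbit v (nth w) xq k = eps k * q + tt k" for k
    proof -
      have "orbit v (nth w) xq k = (-1)^k * ((-1)^n * (q - tau w n)) + tau w k"
        unfolding orbit_tau xq_def by simp
      also have "\<dots> = eps k * q + tt k" by (simp add: eps_def tt_def algebra_simps)
      finally show ?thesis .
    qed
    have cr: "cross (v a - (eps k * q + tt k)) u = cross (v a - eps k * v c - tt k) u + s * cross (eps k * e c) u"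
      for a k u
    proof -
      have eq: "v a - (eps k * q + tt k) = (v a - eps k * v c - tt k) + of_real s * (eps k * e c)"
        by (simp add: q_def ray_pt_def algebra_simps)
      show ?thesis unfolding eq cross_add_left cross_scale_left by (rule refl)
    qed
    have e2: "xq \<in> D w \<longleftrightarrow> (\<forall>k<n. \<forall>j<p. j \<noteq> w ! k \<longrightarrow> 0 < cross (v (w ! k) - orbit v (nth w) xq k) (v j - v (w ! k)))"
      unfolding D_def lw in_region_iff Xc_def using lt by blast
    have e3: "(\<forall>k<n. \<forall>j<p. j \<noteq> w ! k \<longrightarrow> 0 < cross (v (w ! k) - orbit v (nth w) xq k) (v j - v (w ! k)))
        \<longleftrightarrow> (\<forall>i\<in>I. 0 < al i + be i * s)"
      unfolding ok cr I_def al_def be_def by (auto simp: mult.commute)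
    show ?thesis unfolding e1[unfolded q_def] e2 e3 ..
  qed
  show ?thesis unfolding Sw_def lw using key by blast
qed

end

context poly begin

lemma eps_pm: "(-1::complex)^k * (-1)^n \<in> {1, -1}"
  using neg_one_pow[of "k + n"] by (simp add: power_add)

lemma Bset_scale: assumes "\<epsilon> \<in> {1, -1}" "t \<in> Bset N" shows "\<epsilon> * t \<in> Bset N"
  using assms Bset_uminus by auto

lemma Sw_form:
  assumes w: "w \<in> Cset n" and c: "c < p"
  shows "\<exists>(I::(nat \<times> nat) set) al be. finite I \<and> Sw c w = {s. 0 < s \<and> (\<forall>i\<in>I. 0 < al i + be i * s)} \<and>
     (\<forall>i\<in>I. - al i / be i \<in> Sig n c)"
proof -
  define eps where "eps = (\<lambda>k. (-1::complex)^k * (-1)^n)"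
  define tt where "tt = (\<lambda>k. tau w k - eps k * tau w n)"
  define I where "I = {(k, j). k < n \<and> j < p \<and> j \<noteq> w ! k}"
  define al where "al = (\<lambda>(k, j). cross (v (w ! k) - eps k * v c - tt k) (v j - v (w ! k)))"
  define be where "be = (\<lambda>(k, j). cross (eps k * e c) (v j - v (w ! k)))"
  have eq: "Sw c w = {s. 0 < s \<and> (\<forall>i\<in>I. 0 < al i + be i * s)}"
    unfolding eps_def tt_def I_def al_def be_def by (rule Sw_eq[OF w])
  have fin: "finite I"
    by (rule finite_subset[of _ "{..<n} \<times> {..<p}"]) (auto simp: I_def)
  have lw: "length w = n" using w by (simp add: Cset_def)
  have lets: "set w \<subseteq> {..<p}" by (rule Cset_letters[OF w])
  have mem: "- al i / be i \<in> Sig n c" if i: "i \<in> I" for i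
  proof -
    obtain k j where kj: "i = (k, j)" "k < n" "j < p" "j \<noteq> w ! k" using i by (auto simp: I_def)
    have wk: "w ! k < p" using nth_lt[OF lets] kj lw by simp
    have ek: "eps k \<in> {1, -1}" unfolding eps_def by (rule eps_pm)
    have t1: "tau w k \<in> Bset n" using tau_B[OF lets, of k] Bset_mono[of k n] kj lw by auto
    have t2: "tau w n \<in> Bset n" using tau_B[OF lets, of n] lw by simp
    have "tau w k + - (eps k * tau w n) \<in> Bset (n + n)"
      by (intro Bset_add t1 Bset_uminus Bset_scale ek t2)
    then have tt: "tt k \<in> Bset (2 * n)" by (simp add: tt_def mult_2)
    have r: "- al i / be i = root c (w ! k) j (eps k) (tt k)" by (simp add: kj al_def be_def root_def)
    have m: "(w ! k, j, eps k, tt k) \<in> {..<p} \<times> {..<p} \<times> {1, -1} \<times> Bset (2 * n)"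
      using wk kj ek tt by blast
    show ?thesis unfolding Sig_def
      by (rule image_eqI[where x="(w ! k, j, eps k, tt k)"]) (use r m in simp_all)
  qed
  have "finite I \<and> Sw c w = {s. 0 < s \<and> (\<forall>i\<in>I. 0 < al i + be i * s)} \<and> (\<forall>i\<in>I. - al i / be i \<in> Sig n c)"
    using mem by (intro conjI fin eq ballI)
  then show ?thesis by (intro exI[of _ I] exI[of _ al] exI[of _ be])
qed

lemma Sw_inf:
  assumes w: "w \<in> Cset n" and c: "c < p" and ne: "Sw c w \<noteq> {}"
  shows "Inf (Sw c w) \<in> insert 0 (Sig n c) \<and> Inf (Sw c w) \<notin> Sw c w \<and>
    (\<forall>s0\<in>Sw c w. \<forall>s. Inf (Sw c w) < s \<and> s \<le> s0 \<longrightarrow> s \<in> Sw c w) \<and> (\<forall>s\<in>Sw c w. Inf (Sw c w) \<le> s)"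
proof -
  obtain I :: "(nat \<times> nat) set" and al be where f: "finite I" "Sw c w = {s. 0 < s \<and> (\<forall>i\<in>I. 0 < al i + be i * s)}"
    "\<forall>i\<in>I. - al i / be i \<in> Sig n c" using Sw_form[OF w c] by blast
  obtain s0 where s0: "s0 \<in> Sw c w" using ne by blast
  have r: "Inf (Sw c w) \<notin> Sw c w \<and> (Inf (Sw c w) = 0 \<or> (\<exists>i\<in>I. be i \<noteq> 0 \<and> Inf (Sw c w) = - al i / be i))"
    using inf_root[OF f(1) s0[unfolded f(2)]] unfolding f(2) .
  have a: "Inf (Sw c w) \<in> insert 0 (Sig n c)" using r f(3) by auto
  have b: "\<forall>s0\<in>Sw c w. \<forall>s. Inf (Sw c w) < s \<and> s \<le> s0 \<longrightarrow> s \<in> Sw c w"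
  proof (intro ballI allI impI)
    fix s1 s assume s1: "s1 \<in> Sw c w" and s: "Inf (Sw c w) < s \<and> s \<le> s1"
    have s': "Inf {s. 0 < s \<and> (\<forall>i\<in>I. 0 < al i + be i * s)} < s" using s unfolding f(2) by blast
    show "s \<in> Sw c w" unfolding f(2)
      using inf_interval[OF s1[unfolded f(2)] s'] s by blast
  qed
  have bdd: "bdd_below (Sw c w)" by (rule bdd_belowI[of _ 0]) (auto simp: Sw_def)
  have d: "\<forall>s\<in>Sw c w. Inf (Sw c w) \<le> s" using cInf_lower[OF _ bdd] by blast
  show ?thesis using a r b d by blast
qed

lemma W_card: assumes c: "c < p"
  shows "card {w \<in> Cset n. c \<in> Rset w} \<le> Suc (card (Sig n c))"
proof -
  define W where "W = {w \<in> Cset n. c \<in> Rset w}"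
  define \<sigma> where "\<sigma> w = Inf (Sw c w)" for w
  have ne: "Sw c w \<noteq> {}" if hw: "w \<in> W" for w
  proof -
    obtain x where x: "x \<in> D w" "orbit v (nth w) x (length w) \<in> ray c"
      using hw unfolding W_def Rset_def by blast
    obtain s where s: "0 < s" "orbit v (nth w) x (length w) = ray_pt c s" using ray_ray_pt[OF x(2)] by blast
    then show ?thesis using x(1) by (auto simp: Sw_def)
  qed
  have props: "\<sigma> w \<in> insert 0 (Sig n c) \<and> \<sigma> w \<notin> Sw c w \<and>
    (\<forall>s0\<in>Sw c w. \<forall>s. \<sigma> w < s \<and> s \<le> s0 \<longrightarrow> s \<in> Sw c w) \<and> (\<forall>s\<in>Sw c w. \<sigma> w \<le> s)" if hw: "w \<in> W" for w
  proof -
    have "w \<in> Cset n" using hw by (simp add: W_def)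
    from Sw_inf[OF this c ne[OF hw]] show ?thesis unfolding \<sigma>_def .
  qed
  have inj: "inj_on \<sigma> W"
  proof (rule inj_onI)
    fix w1 w2 assume w1: "w1 \<in> W" and w2: "w2 \<in> W" and eq: "\<sigma> w1 = \<sigma> w2"
    obtain s1 where s1: "s1 \<in> Sw c w1" using ne[OF w1] by blast
    obtain s2 where s2: "s2 \<in> Sw c w2" using ne[OF w2] by blast
    have p1: "\<sigma> w1 \<notin> Sw c w1" "\<forall>s0\<in>Sw c w1. \<forall>s. \<sigma> w1 < s \<and> s \<le> s0 \<longrightarrow> s \<in> Sw c w1"
      "\<forall>s\<in>Sw c w1. \<sigma> w1 \<le> s" using props[OF w1] by blast+
    have p2: "\<sigma> w2 \<notin> Sw c w2" "\<forall>s0\<in>Sw c w2. \<forall>s. \<sigma> w2 < s \<and> s \<le> s0 \<longrightarrow> s \<in> Sw c w2"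
      "\<forall>s\<in>Sw c w2. \<sigma> w2 \<le> s" using props[OF w2] by blast+
    have l1: "\<sigma> w1 < s1"
    proof -
      have "\<sigma> w1 \<le> s1" using p1(3) s1 by blast
      moreover have "\<sigma> w1 \<noteq> s1" using p1(1) s1 by blast
      ultimately show ?thesis by simp
    qed
    have l2: "\<sigma> w2 < s2"
    proof -
      have "\<sigma> w2 \<le> s2" using p2(3) s2 by blast
      moreover have "\<sigma> w2 \<noteq> s2" using p2(1) s2 by blast
      ultimately show ?thesis by simp
    qed
    define s where "s = min s1 s2"
    have a1: "\<sigma> w1 < s" "s \<le> s1" using l1 l2 eq by (auto simp: s_def)
    have a2: "\<sigma> w2 < s" "s \<le> s2" using l1 l2 eq by (auto simp: s_def)
    have m1: "s \<in> Sw c w1" using p1(2) s1 a1 by blast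
    have m2: "s \<in> Sw c w2" using p2(2) s2 a2 by blast
    obtain x1 where x1: "x1 \<in> D w1" "orbit v (nth w1) x1 (length w1) = ray_pt c s"
      using m1 unfolding Sw_def by blast
    obtain x2 where x2: "x2 \<in> D w2" "orbit v (nth w2) x2 (length w2) = ray_pt c s"
      using m2 unfolding Sw_def by blast
    note x = x1(1) x2(1) x1(2) x2(2)
    have len: "length w1 = n" "length w2 = n" using w1 w2 by (auto simp: W_def Cset_def)
    show "w1 = w2" using phi_inj[OF len x(1,2)] x(3,4) len by simp
  qed
  have sub: "\<sigma> ` W \<subseteq> insert 0 (Sig n c)" using props by blast
  have fS: "finite (Sig n c)" unfolding Sig_def using finite_Bset by (intro finite_imageI finite_cartesian_product) auto
  have "card W = card (\<sigma> ` W)" using card_image[OF inj] by simp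
  also have "\<dots> \<le> card (insert 0 (Sig n c))" using sub fS by (intro card_mono) auto
  also have "\<dots> \<le> Suc (card (Sig n c))" using fS by (simp add: card_insert_if)
  finally show ?thesis by (simp add: W_def)
qed

end

context poly begin

lemma card_Sig: "card (Sig n c) \<le> p * (p * (2 * card (Bset (2 * n))))"
proof -
  have "card (Sig n c) \<le> card ({..<p} \<times> {..<p} \<times> {1, -1::complex} \<times> Bset (2 * n))"
    unfolding Sig_def by (rule card_image_le) (simp add: finite_Bset)
  also have "\<dots> = p * (p * (2 * card (Bset (2 * n))))"
    by (simp add: card_cartesian_product)
  finally show ?thesis .
qed

lemma Rset_sub: "Rset w \<subseteq> {..<p}" by (auto simp: Rset_def)

lemma step: "card (Cset (Suc n)) \<le> card (Cset n) + p * Suc (p * (p * (2 * card (Bset (2 * n)))))"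
proof -
  define M where "M = p * (p * (2 * card (Bset (2 * n))))"
  have fC: "finite (Cset n)" by (rule finite_Cset)
  have "card (Cset (Suc n)) \<le> (\<Sum>w\<in>Cset n. card (A w))" by (rule Cset_Suc)
  also have "\<dots> \<le> (\<Sum>w\<in>Cset n. Suc (card (Rset w)))"
    by (intro sum_mono card_A_le)
  also have "\<dots> = card (Cset n) + (\<Sum>w\<in>Cset n. card (Rset w))"
    by (simp add: sum_Suc)
  also have "(\<Sum>w\<in>Cset n. card (Rset w)) = (\<Sum>w\<in>Cset n. \<Sum>c<p. if c \<in> Rset w then 1 else 0)"
  proof (rule sum.cong[OF refl])
    fix w
    have "Rset w = {c \<in> {..<p}. c \<in> Rset w}" using Rset_sub by blast
    then have "card (Rset w) = (\<Sum>c\<in>{c \<in> {..<p}. c \<in> Rset w}. 1)" by simp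
    also have "\<dots> = (\<Sum>c<p. if c \<in> Rset w then 1 else 0)" by (rule sum.inter_filter) simp
    finally show "card (Rset w) = (\<Sum>c<p. if c \<in> Rset w then 1 else 0)" .
  qed
  also have "\<dots> = (\<Sum>c<p. \<Sum>w\<in>Cset n. if c \<in> Rset w then 1 else 0)" by (rule sum.swap)
  also have "\<dots> = (\<Sum>c<p. card {w \<in> Cset n. c \<in> Rset w})"
  proof (rule sum.cong[OF refl])
    fix c
    have "card {w \<in> Cset n. c \<in> Rset w} = (\<Sum>w\<in>{w \<in> Cset n. c \<in> Rset w}. 1)" by simp
    also have "\<dots> = (\<Sum>w\<in>Cset n. if c \<in> Rset w then 1 else 0)" by (rule sum.inter_filter[OF fC])
    finally show "(\<Sum>w\<in>Cset n. if c \<in> Rset w then 1 else 0) = card {w \<in> Cset n. c \<in> Rset w}" by simp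
  qed
  also have "\<dots> \<le> (\<Sum>c<p. Suc M)"
  proof (rule sum_mono)
    fix c assume "c \<in> {..<p}"
    then have "card {w \<in> Cset n. c \<in> Rset w} \<le> Suc (card (Sig n c))" using W_card by simp
    also have "\<dots> \<le> Suc M" using card_Sig[of n c] by (simp add: M_def)
    finally show "card {w \<in> Cset n. c \<in> Rset w} \<le> Suc M" .
  qed
  also have "(\<Sum>c<p. Suc M) = p * Suc M" by simp
  finally show ?thesis by (simp add: M_def)
qed

end

lemma int_relation:
  "finite S \<Longrightarrow> d < card S \<Longrightarrow>
    \<exists>lm::'a \<Rightarrow> int. (\<exists>s\<in>S. lm s \<noteq> 0) \<and> (\<forall>i<d. (\<Sum>s\<in>S. lm s * K s i) = 0)"
proof (induction d arbitrary: S K)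
  case 0
  then obtain s where "s \<in> S" by (metis card.empty ex_in_conv less_nat_zero_code)
  then show ?case by (intro exI[of _ "\<lambda>_. 1"]) auto
next
  case (Suc d)
  show ?case
  proof (cases "\<forall>s\<in>S. K s d = 0")
    case True
    obtain lm where l: "\<exists>s\<in>S. lm s \<noteq> 0" "\<forall>i<d. (\<Sum>s\<in>S. lm s * K s i) = 0"
      using Suc.IH[OF Suc.prems(1), of K] Suc.prems(2) by auto
    have "\<forall>i<Suc d. (\<Sum>s\<in>S. lm s * K s i) = 0"
    proof (intro allI impI)
      fix i assume "i < Suc d"
      then consider "i < d" | "i = d" by linarith
      then show "(\<Sum>s\<in>S. lm s * K s i) = 0"
      proof cases
        case 1 then show ?thesis using l(2) by blast
      next
        case 2 then show ?thesis using True by simp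
      qed
    qed
    then show ?thesis using l(1) by blast
  next
    case False
    then obtain s0 where s0: "s0 \<in> S" "K s0 d \<noteq> 0" by blast
    define Dd where "Dd = K s0 d"
    define S' where "S' = S - {s0}"
    define K' where "K' s i = Dd * K s i - K s d * K s0 i" for s i
    have fS': "finite S'" using Suc.prems(1) by (simp add: S'_def)
    have cS': "d < card S'" using Suc.prems s0(1) by (simp add: S'_def)
    obtain lm' where l: "\<exists>s\<in>S'. lm' s \<noteq> 0" "\<forall>i<d. (\<Sum>s\<in>S'. lm' s * K' s i) = 0"
      using Suc.IH[OF fS' cS', of K'] by blast
    define lm where "lm s = (if s = s0 then - (\<Sum>t\<in>S'. lm' t * K t d) else Dd * lm' s)" for s
    have sumS: "(\<Sum>s\<in>S. lm s * K s i) = (\<Sum>s\<in>S'. lm' s * K' s i)" for i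
    proof -
      have S_eq: "S = insert s0 S'" using s0(1) by (auto simp: S'_def)
      have ns: "s0 \<notin> S'" by (simp add: S'_def)
      have "(\<Sum>s\<in>S. lm s * K s i) = lm s0 * K s0 i + (\<Sum>s\<in>S'. lm s * K s i)"
        unfolding S_eq using fS' ns by (simp add: sum.insert)
      also have "(\<Sum>s\<in>S'. lm s * K s i) = (\<Sum>s\<in>S'. Dd * lm' s * K s i)"
        using ns by (intro sum.cong) (auto simp: lm_def)
      also have "lm s0 * K s0 i = - (\<Sum>t\<in>S'. lm' t * K t d * K s0 i)"
        by (simp add: lm_def sum_distrib_right)
      finally have "(\<Sum>s\<in>S. lm s * K s i) = (\<Sum>s\<in>S'. Dd * lm' s * K s i) - (\<Sum>t\<in>S'. lm' t * K t d * K s0 i)"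
        by simp
      also have "\<dots> = (\<Sum>s\<in>S'. Dd * lm' s * K s i - lm' s * K s d * K s0 i)"
        by (simp add: sum_subtractf)
      also have "\<dots> = (\<Sum>s\<in>S'. lm' s * K' s i)"
        by (intro sum.cong) (auto simp: K'_def algebra_simps)
      finally show ?thesis .
    qed
    have "\<forall>i<Suc d. (\<Sum>s\<in>S. lm s * K s i) = 0"
    proof (intro allI impI)
      fix i assume "i < Suc d"
      then consider "i < d" | "i = d" by linarith
      then show "(\<Sum>s\<in>S. lm s * K s i) = 0"
      proof cases
        case 1 then show ?thesis using l(2) sumS by simp
      next
        case 2 then show ?thesis using sumS by (simp add: K'_def Dd_def mult.commute)
      qed
    qed
    moreover have "\<exists>s\<in>S. lm s \<noteq> 0"
    proof -
      obtain s1 where s1: "s1 \<in> S'" "lm' s1 \<noteq> 0" using l(1) by blast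
      then have "s1 \<in> S" "s1 \<noteq> s0" by (auto simp: S'_def)
      moreover have "lm s1 \<noteq> 0" using s1 s0(2) \<open>s1 \<noteq> s0\<close> by (simp add: lm_def Dd_def)
      ultimately show ?thesis by blast
    qed
    ultimately show ?thesis by blast
  qed
qed


context poly begin

abbreviation G where "G \<equiv> side_translation_group p v"

definition gg :: "nat \<Rightarrow> complex" where "gg i = 2 * (v i - v (Suc i mod p))"

lemma G_rep: "s \<in> G \<Longrightarrow> \<exists>k::nat \<Rightarrow> int. s = (\<Sum>i<p. of_int (k i) * gg i)"
  by (auto simp: side_translation_group_def gg_def)

lemma indep_card: assumes S: "finite S" "S \<subseteq> G" "int_independent S" shows "card S \<le> p"
proof (rule ccontr)
  assume "\<not> card S \<le> p"
  then have cS: "p < card S" by simp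
  have "\<forall>s\<in>S. \<exists>k::nat \<Rightarrow> int. s = (\<Sum>i<p. of_int (k i) * gg i)" using S(2) G_rep by blast
  then obtain K where K: "\<forall>s\<in>S. s = (\<Sum>i<p. of_int (K s i) * gg i)" by metis
  obtain lm where l: "\<exists>s\<in>S. lm s \<noteq> 0" "\<forall>i<p. (\<Sum>s\<in>S. lm s * K s i) = 0"
    using int_relation[OF S(1) cS, of K] by blast
  have "(\<Sum>s\<in>S. of_int (lm s) * s) = (\<Sum>s\<in>S. of_int (lm s) * (\<Sum>i<p. of_int (K s i) * gg i))"
    using K by (intro sum.cong) auto
  also have "\<dots> = (\<Sum>s\<in>S. \<Sum>i<p. of_int (lm s * K s i) * gg i)"
    by (simp add: sum_distrib_left mult.assoc)
  also have "\<dots> = (\<Sum>i<p. \<Sum>s\<in>S. of_int (lm s * K s i) * gg i)" by (rule sum.swap)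
  also have "\<dots> = (\<Sum>i<p. of_int (\<Sum>s\<in>S. lm s * K s i) * gg i)"
    by (simp add: sum_distrib_right)
  also have "\<dots> = 0" using l(2) by simp
  finally have "(\<Sum>s\<in>S. of_int (lm s) * s) = 0" .
  then have "\<forall>s\<in>S. lm s = 0" using S(3) by (simp add: int_independent_def)
  then show False using l(1) by blast
qed

lemma rank_props:
  "\<exists>S0. finite S0 \<and> S0 \<subseteq> G \<and> int_independent S0 \<and> card S0 = group_rank G \<and>
     (\<forall>S. finite S \<and> S \<subseteq> G \<and> int_independent S \<longrightarrow> card S \<le> group_rank G)"
proof -
  define Z where "Z = {card S | S. S \<subseteq> G \<and> finite S \<and> int_independent S}"
  have Zsub: "Z \<subseteq> {..p}"
  proof
    fix x assume "x \<in> Z"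
    then obtain S where "x = card S" "S \<subseteq> G" "finite S" "int_independent S" unfolding Z_def by blast
    then show "x \<in> {..p}" using indep_card by simp
  qed
  have fZ: "finite Z" using Zsub finite_subset by blast
  have Zmem: "x \<in> Z \<longleftrightarrow> (\<exists>S. x = card S \<and> S \<subseteq> G \<and> finite S \<and> int_independent S)" for x
    unfolding Z_def by (rule mem_Collect_eq)
  have "int_independent {}" by (simp add: int_independent_def)
  then have "0 \<in> Z" unfolding Zmem by (intro exI[of _ "{}"]) simp
  then have ne: "Z \<noteq> {}" by blast
  have r: "group_rank G = Max Z" unfolding group_rank_def Z_def by (rule refl)
  have "Max Z \<in> Z" by (rule Max_in[OF fZ ne])
  then obtain S0 where S0: "S0 \<subseteq> G" "finite S0" "int_independent S0" "card S0 = Max Z"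
    unfolding Zmem by metis
  have "\<forall>S. finite S \<and> S \<subseteq> G \<and> int_independent S \<longrightarrow> card S \<le> Max Z"
  proof (intro allI impI)
    fix S assume "finite S \<and> S \<subseteq> G \<and> int_independent S"
    then have "card S \<in> Z" unfolding Zmem by blast
    then show "card S \<le> Max Z" by (rule Max_ge[OF fZ])
  qed
  then have A: "\<forall>S. finite S \<and> S \<subseteq> G \<and> int_independent S \<longrightarrow> card S \<le> group_rank G"
    unfolding r .
  have B: "card S0 = group_rank G" using S0(4) unfolding r .
  show ?thesis using S0(1,2,3) A B by blast
qed

end

context poly begin

lemma maximal:
  "\<exists>S0. finite S0 \<and> S0 \<subseteq> G \<and> int_independent S0 \<and> card S0 = group_rank G \<and>
     (\<forall>g\<in>G. \<exists>M::int. M \<noteq> 0 \<and> (\<exists>\<mu>::complex \<Rightarrow> int. of_int M * g = (\<Sum>s\<in>S0. of_int (\<mu> s) * s)))"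
proof -
  obtain S0 where S0: "finite S0" "S0 \<subseteq> G" "int_independent S0" "card S0 = group_rank G"
    "\<forall>S. finite S \<and> S \<subseteq> G \<and> int_independent S \<longrightarrow> card S \<le> group_rank G"
    using rank_props by blast
  have "\<exists>M::int. M \<noteq> 0 \<and> (\<exists>\<mu>::complex \<Rightarrow> int. of_int M * g = (\<Sum>s\<in>S0. of_int (\<mu> s) * s))" if g: "g \<in> G" for g
  proof (cases "g \<in> S0")
    case True
    have "(\<Sum>s\<in>S0. of_int (if s = g then 1 else 0) * s) = (\<Sum>s\<in>S0. if s = g then g else 0)"
      by (intro sum.cong) auto
    also have "\<dots> = g" using True S0(1) by simp
    finally have "of_int 1 * g = (\<Sum>s\<in>S0. of_int ((\<lambda>s. if s = g then 1 else 0) s) * s)" by simp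
    then show ?thesis by (intro exI[of _ "1::int"] conjI exI[of _ "\<lambda>s. if s = g then 1 else 0"]) simp_all
  next
    case False
    define S1 where "S1 = insert g S0"
    have fS1: "finite S1" using S0(1) by (simp add: S1_def)
    have sub1: "S1 \<subseteq> G" using S0(2) g by (simp add: S1_def)
    have cS1: "card S1 = Suc (group_rank G)" using S0(1,4) False by (simp add: S1_def)
    have "\<not> int_independent S1"
    proof
      assume "int_independent S1"
      then have "card S1 \<le> group_rank G" using S0(5) fS1 sub1 by blast
      then show False using cS1 by simp
    qed
    then obtain k where k: "(\<Sum>s\<in>S1. of_int (k s) * s) = 0" "\<exists>s\<in>S1. k s \<noteq> 0"
      unfolding int_independent_def by blast
    have split: "(\<Sum>s\<in>S1. of_int (k s) * s) = of_int (k g) * g + (\<Sum>s\<in>S0. of_int (k s) * s)"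
      unfolding S1_def using S0(1) False by (simp add: sum.insert)
    have kg: "k g \<noteq> 0"
    proof
      assume kg0: "k g = 0"
      then have "(\<Sum>s\<in>S0. of_int (k s) * s) = 0" using k(1) split by simp
      then have "\<forall>s\<in>S0. k s = 0" using S0(3) by (simp add: int_independent_def)
      then show False using k(2) kg0 by (auto simp: S1_def)
    qed
    have e: "of_int (k g) * g = (\<Sum>s\<in>S0. of_int (- k s) * s)"
      using k(1) split by (simp add: sum_negf eq_neg_iff_add_eq_0)
    show ?thesis
      by (intro exI[of _ "k g"] conjI kg exI[of _ "\<lambda>s. - k s"]) (simp add: e)
  qed
  then have all: "\<forall>g\<in>G. \<exists>M::int. M \<noteq> 0 \<and> (\<exists>\<mu>::complex \<Rightarrow> int. of_int M * g = (\<Sum>s\<in>S0. of_int (\<mu> s) * s))"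
    by blast
  show ?thesis using S0(1,2,3,4) all by (intro exI[of _ S0] conjI)
qed

end

context poly begin

lemma count_G:
  assumes h: "\<forall>i<p. h i \<in> G"
  shows "\<exists>K::nat. \<forall>N. card {\<Sum>i<p. of_int (\<kappa> i) * h i | \<kappa>. \<forall>i. \<bar>\<kappa> i\<bar> \<le> int N} \<le> K * (N + 1) ^ group_rank G"
proof -
  obtain S0 :: "complex set" where S0: "finite S0" "S0 \<subseteq> G" "int_independent S0" "card S0 = group_rank G"
    "\<forall>g\<in>G. \<exists>M::int. M \<noteq> 0 \<and> (\<exists>\<mu>::complex \<Rightarrow> int. of_int M * g = (\<Sum>s\<in>S0. of_int (\<mu> s) * s))"
    using maximal by blast
  have exi: "\<forall>i\<in>{..<p}. \<exists>M\<mu> :: int \<times> (complex \<Rightarrow> int). fst M\<mu> \<noteq> 0 \<and>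
      of_int (fst M\<mu>) * h i = (\<Sum>s\<in>S0. of_int (snd M\<mu> s) * s)"
  proof
    fix i assume "i \<in> {..<p}"
    then have "h i \<in> G" using h by simp
    then obtain M \<mu> where "M \<noteq> 0" "of_int M * h i = (\<Sum>s\<in>S0. of_int (\<mu> s) * s)" using S0(5) by blast
    then show "\<exists>M\<mu> :: int \<times> (complex \<Rightarrow> int). fst M\<mu> \<noteq> 0 \<and>
      of_int (fst M\<mu>) * h i = (\<Sum>s\<in>S0. of_int (snd M\<mu> s) * s)" by (intro exI[of _ "(M, \<mu>)"]) simp
  qed
  obtain f :: "nat \<Rightarrow> int \<times> (complex \<Rightarrow> int)" where f: "\<forall>i\<in>{..<p}. fst (f i) \<noteq> 0 \<and>
      of_int (fst (f i)) * h i = (\<Sum>s\<in>S0. of_int (snd (f i) s) * s)"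
    using bchoice[OF exi] by blast
  define Mf where "Mf i = fst (f i)" for i
  define \<mu>f where "\<mu>f i = snd (f i)" for i
  have Mf0: "Mf i \<noteq> 0" if "i < p" for i using f that by (simp add: Mf_def)
  have Mfh: "of_int (Mf i) * h i = (\<Sum>s\<in>S0. of_int (\<mu>f i s) * s)" if "i < p" for i
    using f that by (simp add: Mf_def \<mu>f_def)
  define Mt where "Mt = (\<Prod>i<p. Mf i)"
  have Mt0: "Mt \<noteq> 0" unfolding Mt_def using Mf0 by (simp add: prod_zero_iff)
  define Q where "Q i = (\<Prod>l\<in>{..<p} - {i}. Mf l)" for i
  have MQ: "Mt = Mf i * Q i" if "i < p" for i
    unfolding Mt_def Q_def using that by (intro prod.remove) auto
  define Bn where "Bn = (\<Sum>i<p. \<Sum>s\<in>S0. nat \<bar>Q i * \<mu>f i s\<bar>)"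
  define cf where "cf \<kappa> s = (\<Sum>i<p. \<kappa> i * Q i * \<mu>f i s)" for \<kappa> :: "nat \<Rightarrow> int" and s
  have key: "of_int Mt * (\<Sum>i<p. of_int (\<kappa> i) * h i) = (\<Sum>s\<in>S0. of_int (cf \<kappa> s) * s)" for \<kappa>
  proof -
    have "of_int Mt * (\<Sum>i<p. of_int (\<kappa> i) * h i) = (\<Sum>i<p. of_int (\<kappa> i) * (of_int Mt * h i))"
      by (simp add: sum_distrib_left algebra_simps)
    also have "\<dots> = (\<Sum>i<p. of_int (\<kappa> i * Q i) * (of_int (Mf i) * h i))"
      by (intro sum.cong refl) (simp add: MQ algebra_simps)
    also have "\<dots> = (\<Sum>i<p. of_int (\<kappa> i * Q i) * (\<Sum>s\<in>S0. of_int (\<mu>f i s) * s))"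
      by (intro sum.cong refl) (simp add: Mfh)
    also have "\<dots> = (\<Sum>i<p. \<Sum>s\<in>S0. of_int (\<kappa> i * Q i * \<mu>f i s) * s)"
      by (simp add: sum_distrib_left algebra_simps)
    also have "\<dots> = (\<Sum>s\<in>S0. \<Sum>i<p. of_int (\<kappa> i * Q i * \<mu>f i s) * s)" by (rule sum.swap)
    also have "\<dots> = (\<Sum>s\<in>S0. of_int (cf \<kappa> s) * s)"
      by (simp add: cf_def sum_distrib_right)
    finally show ?thesis .
  qed
  have bound: "\<bar>cf \<kappa> s\<bar> \<le> int N * int Bn" if k: "\<forall>i. \<bar>\<kappa> i\<bar> \<le> int N" and s: "s \<in> S0" for \<kappa> N s
  proof -
    have "\<bar>cf \<kappa> s\<bar> \<le> (\<Sum>i<p. \<bar>\<kappa> i * Q i * \<mu>f i s\<bar>)" unfolding cf_def by (rule sum_abs)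
    also have "\<dots> \<le> (\<Sum>i<p. int N * \<bar>Q i * \<mu>f i s\<bar>)"
    proof (rule sum_mono)
      fix i
      have "\<bar>\<kappa> i * Q i * \<mu>f i s\<bar> = \<bar>\<kappa> i\<bar> * \<bar>Q i * \<mu>f i s\<bar>" by (simp add: abs_mult)
      also have "\<dots> \<le> int N * \<bar>Q i * \<mu>f i s\<bar>" using k by (intro mult_right_mono) auto
      finally show "\<bar>\<kappa> i * Q i * \<mu>f i s\<bar> \<le> int N * \<bar>Q i * \<mu>f i s\<bar>" .
    qed
    also have "\<dots> = int N * (\<Sum>i<p. \<bar>Q i * \<mu>f i s\<bar>)" by (simp add: sum_distrib_left)
    also have "(\<Sum>i<p. \<bar>Q i * \<mu>f i s\<bar>) \<le> (\<Sum>i<p. \<Sum>s'\<in>S0. \<bar>Q i * \<mu>f i s'\<bar>)"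
    proof (rule sum_mono)
      fix i
      show "\<bar>Q i * \<mu>f i s\<bar> \<le> (\<Sum>s'\<in>S0. \<bar>Q i * \<mu>f i s'\<bar>)"
        using S0(1) s by (intro member_le_sum) auto
    qed
    also have "(\<Sum>i<p. \<Sum>s'\<in>S0. \<bar>Q i * \<mu>f i s'\<bar>) = int Bn"
      unfolding Bn_def by (simp add: of_nat_sum)
    finally show ?thesis by (simp add: mult_left_mono)
  qed
  define r where "r = group_rank G"
  define K where "K = (2 * Bn + 1) ^ r"
  have "card {\<Sum>i<p. of_int (\<kappa> i) * h i | \<kappa>. \<forall>i. \<bar>\<kappa> i\<bar> \<le> int N} \<le> K * (N + 1) ^ r" for N
  proof -
    define GN where "GN = {\<Sum>i<p. of_int (\<kappa> i) * h i | \<kappa>. \<forall>i. \<bar>\<kappa> i\<bar> \<le> int N}"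
    define a where "a = int N * int Bn"
    define Box where "Box = PiE S0 (\<lambda>_. {- a..a})"
    define P where "P y c \<longleftrightarrow> c \<in> Box \<and> of_int Mt * y = (\<Sum>s\<in>S0. of_int (c s) * s)" for y c
    define \<Phi> where "\<Phi> y = (SOME c. P y c)" for y
    have ex: "\<exists>c. P y c" if hy: "y \<in> GN" for y
    proof -
      obtain \<kappa> where k: "\<forall>i. \<bar>\<kappa> i\<bar> \<le> int N" "y = (\<Sum>i<p. of_int (\<kappa> i) * h i)"
        using hy unfolding GN_def by blast
      have cfm: "cf \<kappa> s \<in> {- a..a}" if hs: "s \<in> S0" for s
      proof -
        have b: "\<bar>cf \<kappa> s\<bar> \<le> a" using bound[OF k(1) hs] by (simp add: a_def)
        have "cf \<kappa> s \<le> a" using abs_le_D1[OF b] .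
        moreover have "- cf \<kappa> s \<le> a" using abs_le_D2[OF b] .
        ultimately show ?thesis by simp
      qed
      have "restrict (cf \<kappa>) S0 \<in> Box"
        unfolding Box_def restrict_PiE_iff using cfm by blast
      moreover have "of_int Mt * y = (\<Sum>s\<in>S0. of_int (restrict (cf \<kappa>) S0 s) * s)"
        using key[of \<kappa>] k(2) by simp
      ultimately show ?thesis unfolding P_def by blast
    qed
    have P\<Phi>: "P y (\<Phi> y)" if "y \<in> GN" for y unfolding \<Phi>_def by (rule someI_ex[OF ex[OF that]])
    have inj: "inj_on \<Phi> GN"
    proof (rule inj_onI)
      fix y1 y2 assume y: "y1 \<in> GN" "y2 \<in> GN" "\<Phi> y1 = \<Phi> y2"
      have "of_int Mt * y1 = of_int Mt * y2" using P\<Phi>[OF y(1)] P\<Phi>[OF y(2)] y(3) by (simp add: P_def)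
      then show "y1 = y2" using Mt0 by simp
    qed
    have sub: "\<Phi> ` GN \<subseteq> Box" using P\<Phi> by (auto simp: P_def)
    have fB: "finite Box" unfolding Box_def using S0(1) by (intro finite_PiE) auto
    have "card GN = card (\<Phi> ` GN)" using card_image[OF inj] by simp
    also have "\<dots> \<le> card Box" using sub fB by (rule card_mono[rotated])
    also have "card Box = (nat (2 * a + 1)) ^ r"
      unfolding Box_def using S0(1) by (simp add: card_PiE S0(4) r_def)
    also have "nat (2 * a + 1) = 2 * N * Bn + 1"
    proof -
      have "2 * a + 1 = int (2 * N * Bn + 1)" by (simp add: a_def)
      then show ?thesis by (simp only: nat_int)
    qed
    also have "(2 * N * Bn + 1) ^ r \<le> ((2 * Bn + 1) * (N + 1)) ^ r"
      by (intro power_mono) (auto simp: algebra_simps)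
    also have "\<dots> = K * (N + 1) ^ r" unfolding K_def by (rule power_mult_distrib)
    finally show ?thesis unfolding GN_def .
  qed
  then show ?thesis unfolding r_def by blast
qed

end

context poly begin

lemma hG: assumes i: "i < p" shows "2 * (v i - v 0) \<in> G"
proof -
  define k where "k l = (if l < i then -1 else 0 :: int)" for l
  have "(\<Sum>l<p. of_int (k l) * (2 * (v l - v (Suc l mod p)))) =
      (\<Sum>l<p. if l < i then - (2 * (v l - v (Suc l mod p))) else 0)"
    by (intro sum.cong) (auto simp: k_def)
  also have "\<dots> = (\<Sum>l\<in>{l \<in> {..<p}. l < i}. - (2 * (v l - v (Suc l mod p))))"
    by (rule sum.inter_filter[symmetric]) simp
  also have "{l \<in> {..<p}. l < i} = {..<i}" using i by auto
  also have "(\<Sum>l<i. - (2 * (v l - v (Suc l mod p)))) = (\<Sum>l<i. 2 * v (Suc l) - 2 * v l)"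
  proof (intro sum.cong refl)
    fix l assume "l \<in> {..<i}"
    then have "Suc l mod p = Suc l" using i by simp
    then show "- (2 * (v l - v (Suc l mod p))) = 2 * v (Suc l) - 2 * v l" by (simp add: algebra_simps)
  qed
  also have "\<dots> = 2 * v i - 2 * v 0" by (rule sum_lessThan_telescope)
  finally have "2 * (v i - v 0) = (\<Sum>l<p. of_int (k l) * (2 * (v l - v (Suc l mod p))))"
    by (simp add: algebra_simps)
  then show ?thesis unfolding side_translation_group_def by blast
qed

lemma finite_comb: "finite {\<Sum>i<p. of_int (\<kappa> i) * h i | \<kappa>. \<forall>i. \<bar>\<kappa> i\<bar> \<le> int N}"
proof -
  define f where "f \<kappa> = (\<Sum>i<p. of_int (\<kappa> i) * h i)" for \<kappa> :: "nat \<Rightarrow> int"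
  have "{\<Sum>i<p. of_int (\<kappa> i) * h i | \<kappa>. \<forall>i. \<bar>\<kappa> i\<bar> \<le> int N} \<subseteq> f ` (PiE {..<p} (\<lambda>_. {- int N..int N}))"
  proof
    fix t assume "t \<in> {\<Sum>i<p. of_int (\<kappa> i) * h i | \<kappa>. \<forall>i. \<bar>\<kappa> i\<bar> \<le> int N}"
    then obtain \<kappa> where k: "\<forall>i. \<bar>\<kappa> i\<bar> \<le> int N" "t = f \<kappa>" by (auto simp: f_def)
    have "f \<kappa> = f (restrict \<kappa> {..<p})" unfolding f_def by (intro sum.cong) auto
    moreover have "restrict \<kappa> {..<p} \<in> PiE {..<p} (\<lambda>_. {- int N..int N})"
    proof -
      have "\<kappa> i \<in> {- int N..int N}" for i
      proof -
        have "\<bar>\<kappa> i\<bar> \<le> int N" using k(1) by blast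
        then show ?thesis by (simp add: abs_le_iff)
      qed
      then show ?thesis by auto
    qed
    ultimately show "t \<in> f ` (PiE {..<p} (\<lambda>_. {- int N..int N}))" using k(2) by blast
  qed
  moreover have "finite (f ` (PiE {..<p} (\<lambda>_. {- int N..int N})))"
    by (intro finite_imageI finite_PiE) auto
  ultimately show ?thesis using finite_subset by blast
qed

lemma Bset_bound: "\<exists>K::nat. \<forall>N. card (Bset N) \<le> K * (N + 1) ^ (group_rank G + 1)"
proof -
  define h where "h i = 2 * (v i - v 0)" for i
  obtain K0 where K0: "\<forall>N. card {\<Sum>i<p. of_int (\<kappa> i) * h i | \<kappa>. \<forall>i. \<bar>\<kappa> i\<bar> \<le> int N} \<le> K0 * (N + 1) ^ group_rank G"
    using count_G[of h] hG by (auto simp: h_def)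
  define r where "r = group_rank G"
  have "card (Bset N) \<le> ((2 * p + 1) * K0) * (N + 1) ^ (r + 1)" for N
  proof -
    define GN where "GN = {\<Sum>i<p. of_int (\<kappa> i) * h i | \<kappa>. \<forall>i. \<bar>\<kappa> i\<bar> \<le> int N}"
    define Ms where "Ms = {- int (p * N)..int (p * N)}"
    have fGN: "finite GN" unfolding GN_def by (rule finite_comb)
    have sub: "Bset N \<subseteq> (\<lambda>(m, y). of_int m * (2 * v 0) + y) ` (Ms \<times> GN)"
    proof
      fix t assume "t \<in> Bset N"
      then obtain \<kappa> where k: "\<forall>i. \<bar>\<kappa> i\<bar> \<le> int N" "t = (\<Sum>i<p. of_int (\<kappa> i) * (2 * v i))"
        using Bset_E by blast
      define m where "m = (\<Sum>i<p. \<kappa> i)"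
      define y where "y = (\<Sum>i<p. of_int (\<kappa> i) * h i)"
      have "\<bar>m\<bar> \<le> (\<Sum>i<p. \<bar>\<kappa> i\<bar>)" unfolding m_def by (rule sum_abs)
      also have "\<dots> \<le> (\<Sum>i<p. int N)" using k(1) by (intro sum_mono) auto
      also have "\<dots> = int (p * N)" by simp
      finally have "m \<in> Ms" unfolding Ms_def by (simp add: abs_le_iff)
      moreover have "y \<in> GN" unfolding GN_def y_def using k(1) by blast
      moreover have "t = of_int m * (2 * v 0) + y"
      proof -
        have "t = (\<Sum>i<p. of_int (\<kappa> i) * (2 * v 0) + of_int (\<kappa> i) * h i)"
          unfolding k(2) by (intro sum.cong) (auto simp: h_def algebra_simps)
        also have "\<dots> = of_int m * (2 * v 0) + y"
          by (simp add: sum.distrib m_def y_def sum_distrib_right)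
        finally show ?thesis .
      qed
      ultimately show "t \<in> (\<lambda>(m, y). of_int m * (2 * v 0) + y) ` (Ms \<times> GN)" by force
    qed
    have "card (Bset N) \<le> card ((\<lambda>(m, y). of_int m * (2 * v 0) + y) ` (Ms \<times> GN))"
      using sub fGN by (intro card_mono) (auto simp: Ms_def)
    also have "\<dots> \<le> card (Ms \<times> GN)" by (rule card_image_le) (use fGN in \<open>simp add: Ms_def\<close>)
    also have "\<dots> = card Ms * card GN" by (rule card_cartesian_product)
    also have "card Ms = 2 * p * N + 1"
    proof -
      have "card Ms = nat (int (p * N) - - int (p * N) + 1)" unfolding Ms_def by simp
      also have "int (p * N) - - int (p * N) + 1 = int (2 * p * N + 1)" by simp
      finally show ?thesis by (simp only: nat_int)
    qed
    also have "card GN \<le> K0 * (N + 1) ^ r" using K0 by (simp add: GN_def r_def)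
    then have "(2 * p * N + 1) * card GN \<le> (2 * p * N + 1) * (K0 * (N + 1) ^ r)"
      by (rule mult_left_mono) simp
    also have "(2 * p * N + 1) \<le> (2 * p + 1) * (N + 1)" by (simp add: algebra_simps)
    then have "(2 * p * N + 1) * (K0 * (N + 1) ^ r) \<le> ((2 * p + 1) * (N + 1)) * (K0 * (N + 1) ^ r)"
      by (rule mult_right_mono) simp
    also have "\<dots> = ((2 * p + 1) * K0) * (N + 1) ^ (r + 1)" by (simp add: algebra_simps)
    finally show ?thesis .
  qed
  then show ?thesis unfolding r_def by blast
qed

end

theorem mainTheorem13:
  fixes p :: nat and v :: "nat \<Rightarrow> complex"
  assumes "convex_polygon p v"
  shows "\<exists>C::real. \<exists>N. \<forall>n\<ge>N.
           real (complexity p v n) \<le> C * real n ^ (group_rank (side_translation_group p v) + 2)"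
proof -
  interpret poly p v by unfold_locales (rule assms)
  define r where "r = group_rank (side_translation_group p v)"
  obtain KB where KB: "\<forall>N. card (Bset N) \<le> KB * (N + 1) ^ (r + 1)"
    using Bset_bound unfolding r_def by blast
  define C1 where "C1 = p + p * (p * (p * (2 * (KB * 2 ^ (r + 1)))))"
  have inc: "p * Suc (p * (p * (2 * card (Bset (2 * n))))) \<le> C1 * (n + 1) ^ (r + 1)" for n
  proof -
    define X where "X = (n + 1) ^ (r + 1)"
    have X1: "1 \<le> X" unfolding X_def by (rule one_le_power) simp
    have "card (Bset (2 * n)) \<le> KB * (2 * n + 1) ^ (r + 1)" using KB by simp
    also have "(2 * n + 1) ^ (r + 1) \<le> (2 * (n + 1)) ^ (r + 1)" by (intro power_mono) simp_all
    also have "(2 * (n + 1)) ^ (r + 1) = 2 ^ (r + 1) * X" unfolding X_def by (rule power_mult_distrib)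
    finally have b: "card (Bset (2 * n)) \<le> KB * (2 ^ (r + 1) * X)" by simp
    have s1: "2 * card (Bset (2 * n)) \<le> 2 * (KB * (2 ^ (r + 1) * X))" using b by linarith
    have s2: "p * (2 * card (Bset (2 * n))) \<le> p * (2 * (KB * (2 ^ (r + 1) * X)))"
      using s1 by (rule mult_left_mono) simp
    have "p * (p * (2 * card (Bset (2 * n)))) \<le> p * (p * (2 * (KB * (2 ^ (r + 1) * X))))"
      using s2 by (rule mult_left_mono) simp
    then have "p * Suc (p * (p * (2 * card (Bset (2 * n))))) \<le> p + p * (p * (p * (2 * (KB * (2 ^ (r + 1) * X)))))"
      by simp
    also have "p \<le> p * X" using X1 by simp
    then have "p + p * (p * (p * (2 * (KB * (2 ^ (r + 1) * X))))) \<le> p * X + p * (p * (p * (2 * (KB * (2 ^ (r + 1) * X)))))"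
      by simp
    also have "\<dots> = C1 * X" by (simp add: C1_def algebra_simps)
    finally show ?thesis by (simp add: X_def)
  qed
  have cnt: "card (Cset n) \<le> 1 + C1 * n ^ (r + 2)" for n
  proof (induction n)
    case 0
    have "Cset 0 \<subseteq> {[]}" by (auto simp: Cset_def)
    then have "card (Cset 0) \<le> card {[] :: nat list}" by (intro card_mono) auto
    then show ?case by simp
  next
    case (Suc n)
    have "card (Cset (Suc n)) \<le> card (Cset n) + C1 * (n + 1) ^ (r + 1)"
      using step[of n] inc[of n] by linarith
    also have "\<dots> \<le> 1 + C1 * n ^ (r + 2) + C1 * (n + 1) ^ (r + 1)" using Suc.IH by simp
    also have "n ^ (r + 2) + (n + 1) ^ (r + 1) \<le> (n + 1) ^ (r + 2)"
    proof -
      have "n ^ (r + 2) = n * n ^ (r + 1)" by simp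
      also have "\<dots> \<le> n * (n + 1) ^ (r + 1)" by (intro mult_left_mono power_mono) simp_all
      finally have "n ^ (r + 2) \<le> n * (n + 1) ^ (r + 1)" .
      moreover have "(n + 1) ^ (r + 2) = n * (n + 1) ^ (r + 1) + (n + 1) ^ (r + 1)" by simp
      ultimately show ?thesis by linarith
    qed
    then have "C1 * (n ^ (r + 2) + (n + 1) ^ (r + 1)) \<le> C1 * (n + 1) ^ (r + 2)" by (rule mult_left_mono) simp
    then have "1 + C1 * n ^ (r + 2) + C1 * (n + 1) ^ (r + 1) \<le> 1 + C1 * (Suc n) ^ (r + 2)"
      by (simp add: algebra_simps)
    finally show ?case .
  qed
  have fin: "real (complexity p v n) \<le> real (1 + C1) * real n ^ (r + 2)" if n: "1 \<le> n" for n
  proof -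
    have "complexity p v n \<le> 1 + C1 * n ^ (r + 2)" using complexity_le[of n] cnt[of n] by linarith
    also have "1 \<le> n ^ (r + 2)" using n by simp
    then have "1 + C1 * n ^ (r + 2) \<le> (1 + C1) * n ^ (r + 2)" by (simp add: algebra_simps)
    finally have "complexity p v n \<le> (1 + C1) * n ^ (r + 2)" .
    then have "real (complexity p v n) \<le> real ((1 + C1) * n ^ (r + 2))" by (rule of_nat_mono)
    also have "real ((1 + C1) * n ^ (r + 2)) = real (1 + C1) * real n ^ (r + 2)"
      by (simp only: of_nat_mult of_nat_power)
    finally show ?thesis .
  qed
  show ?thesis unfolding r_def[symmetric] using fin by blast
qed


end
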